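(* Let $G=(V,E)$ be a connected graph with $n$ nodes and $m$ edges, and let $r\in V$. Run the content-oblivious BFS algorithm $\mathcal{A}$ with root $r$ in the asynchronous model, under arbitrary finite message delays, non-FIFO delivery, and arbitrary corruption of message contents. Then $\mathcal{A}$ terminates, and the following hold. - The edges $\{u,\mathrm{parent}_u\}$ for $u\neq r$ form a BFS tree $\mathcal{T}$ of $G$ rooted at $r$: every node $u\neq r$ at distance $k$ from $r$ has $\mathrm{parent}_u$ equal to a neighbour at distance $k-1$ from $r$. - At the end, for every node $u$, $\mathrm{children}_u=\{v:\mathrm{parent}_v=u\}$. Thus each node knows its parent and all its incident edges in $\mathcal{T}$. - The algorithm sends $O(nm)$ messages in total.
   Context: Asynchronous model: there are no timing assumptions, and messages are not necessarily delivered in FIFO order. A node is asleep until it receives a message. On receiving one, it performs local computation, sends zero or more messages to neighbours, and goes back to sleep. Each node knows $n$ and its neighbour set $\mathcal{N}_u$. Algorithm $\mathcal{A}$ (content-oblivious BFS). Nodes ignore the contents of all messages; decisions depend only on from which neighbour a message arrives. Every node $u$ has variables $\mathrm{state}_u\in\{\mathsf{INIT},\mathsf{IDLE},\mathsf{EXPLORE},\mathsf{DONE}\}$, $\mathrm{parent}_u$, $\mathrm{children}_u$ and $\mathrm{count}_u$. All nodes start in $\mathsf{INIT}$. The root $r$ sets $\mathrm{parent}_r=\bot$, $\mathrm{children}_r=\mathcal{N}_r$, $\mathrm{count}_r=0$ and $\mathrm{state}_r=\mathsf{IDLE}$. It then repeatedly invokes Explore until $\mathrm{state}_r=\mathsf{DONE}$.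 The nodes handle incoming messages as follows. (i) SetParent: a node $u$ in $\mathsf{INIT}$ that receives a message from $v$ sets $\mathrm{parent}_u=v$, $\mathrm{children}_u=\mathcal{N}_u\setminus\{v\}$, $\mathrm{count}_u=0$ and $\mathrm{state}_u=\mathsf{IDLE}$, and sends a message to $v$. (ii) MarkSibling: a node $u$ in $\mathsf{IDLE}$ or $\mathsf{DONE}$ that receives a message from some $v\neq\mathrm{parent}_u$ removes $v$ from $\mathrm{children}_u$ and sends a message to $v$. (iii) Explore: a node $u$ in $\mathsf{IDLE}$ that receives a message from $\mathrm{parent}_u$ (or the root, when it invokes Explore) proceeds as follows. - It sets $\mathrm{state}_u=\mathsf{EXPLORE}$ and increments $\mathrm{count}_u$. - Sequentially, for each $v\in\mathcal{N}_u\setminus\{\mathrm{parent}_u\}$, it sends a message to $v$ and waits until it receives a message from $v$. - If $\mathrm{count}_u=n-1$, it performs an extra "dummy" exploration: sequentially, for each $v\in\mathrm{children}_u$, it sends a message to $v$ and waits for a message from $v$. - It then sends a message to $\mathrm{parent}_u$; the root skips this step. - Finally it sets $\mathrm{state}_u=\mathsf{DONE}$ if $\mathrm{count}_u=n-1$, and $\mathrm{state}_u=\mathsf{IDLE}$ otherwise. *)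

theory Defs
  imports Main
begin

text \<open>A simple undirected graph on a finite vertex set V, given by a symmetric,
irreflexive edge relation E (a set of ordered pairs, each undirected edge appearing
in both orientations).\<close>

definition simple_graph :: "'v set \<Rightarrow> ('v \<times> 'v) set \<Rightarrow> bool" where
  "simple_graph V E \<longleftrightarrow> finite V \<and> E \<subseteq> V \<times> V \<and> sym E \<and> (\<forall>x. (x, x) \<notin> E)"

definition graph_connected :: "'v set \<Rightarrow> ('v \<times> 'v) set \<Rightarrow> bool" where
  "graph_connected V E \<longleftrightarrow> (\<forall>u\<in>V. \<forall>v\<in>V. (u, v) \<in> E\<^sup>*)"

definition nbrs :: "('v \<times> 'v) set \<Rightarrow> 'v \<Rightarrow> 'v set" where
  "nbrs E u = {v. (u, v) \<in> E}"

definition num_edges :: "('v \<times> 'v) set \<Rightarrow> nat" where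
  "num_edges E = card {{u, v} | u v. (u, v) \<in> E}"

definition gdist :: "('v \<times> 'v) set \<Rightarrow> 'v \<Rightarrow> 'v \<Rightarrow> nat" where
  "gdist E u v = (LEAST k. (u, v) \<in> E ^^ k)"

datatype status = INIT | IDLE | EXPLORE | DONE

text \<open>Local state: the paper's variables state, parent, children, count, plus the
program position of the (sequential) Explore procedure: the set of neighbours still to
be sent to in the current loop, the neighbour currently waited for, and whether the
dummy exploration has started.\<close>
record 'v lstate =
  lstatus :: status
  lparent :: "'v option"
  lchildren :: "'v set"
  lcount :: nat
  ltodo :: "'v set"
  lwait :: "'v option"
  ldummy :: bool

text \<open>Messages are content-free (content-oblivious algorithm, contents may be
arbitrarily corrupted): the network is described by the number of messages in transit
on each directed edge (non-FIFO, any in-transit message may be delivered next).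
nsent counts all messages sent so far.\<close>
record 'v conf =
  loc :: "'v \<Rightarrow> 'v lstate"
  chan :: "'v \<times> 'v \<Rightarrow> nat"
  nsent :: nat

definition setl :: "'v conf \<Rightarrow> 'v \<Rightarrow> 'v lstate \<Rightarrow> 'v conf" where
  "setl c u s = c\<lparr>loc := (loc c)(u := s)\<rparr>"

definition send :: "'v conf \<Rightarrow> 'v \<Rightarrow> 'v \<Rightarrow> 'v conf" where
  "send c u w = c\<lparr>chan := (chan c)((u, w) := chan c (u, w) + 1), nsent := nsent c + 1\<rparr>"

definition recv :: "'v conf \<Rightarrow> 'v \<Rightarrow> 'v \<Rightarrow> 'v conf" where
  "recv c v u = c\<lparr>chan := (chan c)((v, u) := chan c (v, u) - 1)\<rparr>"

definition begin_explore :: "'v set \<Rightarrow> 'v lstate \<Rightarrow> 'v lstate" where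
  "begin_explore nb s = s\<lparr>lstatus := EXPLORE, lcount := lcount s + 1,
      ltodo := nb - set_option (lparent s), lwait := None, ldummy := False\<rparr>"

text \<open>Local continuation of Explore at node u (n = number of nodes) until it either
sends to the next neighbour and waits, or finishes.\<close>
inductive adv :: "nat \<Rightarrow> 'v \<Rightarrow> 'v conf \<Rightarrow> 'v conf \<Rightarrow> bool" for n :: nat where
  adv_send: "w \<in> ltodo (loc c u) \<Longrightarrow>
    adv n u c (send (setl c u ((loc c u)\<lparr>ltodo := ltodo (loc c u) - {w}, lwait := Some w\<rparr>)) u w)"
| adv_dummy: "ltodo (loc c u) = {} \<Longrightarrow> \<not> ldummy (loc c u) \<Longrightarrow> lcount (loc c u) = n - 1 \<Longrightarrow>
    adv n u (setl c u ((loc c u)\<lparr>ltodo := lchildren (loc c u), ldummy := True\<rparr>)) c' \<Longrightarrow>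
    adv n u c c'"
| adv_fin: "ltodo (loc c u) = {} \<Longrightarrow> ldummy (loc c u) \<or> lcount (loc c u) \<noteq> n - 1 \<Longrightarrow>
    c' = setl c u ((loc c u)\<lparr>lstatus := (if lcount (loc c u) = n - 1 then DONE else IDLE)\<rparr>) \<Longrightarrow>
    adv n u c (case lparent (loc c u) of None \<Rightarrow> c' | Some p \<Rightarrow> send c' u p)"

definition init_conf :: "('v \<times> 'v) set \<Rightarrow> 'v \<Rightarrow> 'v conf" where
  "init_conf E r =
     \<lparr>loc = (\<lambda>u. if u = r
                then \<lparr>lstatus = IDLE, lparent = None, lchildren = nbrs E r, lcount = 0,
                      ltodo = {}, lwait = None, ldummy = False\<rparr>
                else \<lparr>lstatus = INIT, lparent = None, lchildren = {}, lcount = 0,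
                      ltodo = {}, lwait = None, ldummy = False\<rparr>),
      chan = (\<lambda>_. 0), nsent = 0\<rparr>"

text \<open>One atomic step of the asynchronous system: either the root invokes Explore
(when IDLE), or some in-transit message (from v to u) is delivered and handled.
A message for which no rule applies is consumed without effect.\<close>
inductive step :: "'v set \<Rightarrow> ('v \<times> 'v) set \<Rightarrow> 'v \<Rightarrow> 'v conf \<Rightarrow> 'v conf \<Rightarrow> bool"
  for V :: "'v set" and E :: "('v \<times> 'v) set" and r :: 'v where
  root_invoke: "lstatus (loc c r) = IDLE \<Longrightarrow>
    adv (card V) r (setl c r (begin_explore (nbrs E r) (loc c r))) c' \<Longrightarrow> step V E r c c'"
| set_parent: "chan c (v, u) > 0 \<Longrightarrow> lstatus (loc c u) = INIT \<Longrightarrow>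
    step V E r c (send (setl (recv c v u) u ((loc c u)\<lparr>lstatus := IDLE, lparent := Some v,
                     lchildren := nbrs E u - {v}, lcount := 0\<rparr>)) u v)"
| mark_sibling: "chan c (v, u) > 0 \<Longrightarrow> lstatus (loc c u) \<in> {IDLE, DONE} \<Longrightarrow>
    lparent (loc c u) \<noteq> Some v \<Longrightarrow>
    step V E r c (send (setl (recv c v u) u ((loc c u)\<lparr>lchildren := lchildren (loc c u) - {v}\<rparr>)) u v)"
| explore: "chan c (v, u) > 0 \<Longrightarrow> lstatus (loc c u) = IDLE \<Longrightarrow> lparent (loc c u) = Some v \<Longrightarrow>
    adv (card V) u (setl (recv c v u) u (begin_explore (nbrs E u) (loc c u))) c' \<Longrightarrow>
    step V E r c c'"
| reply: "chan c (v, u) > 0 \<Longrightarrow> lstatus (loc c u) = EXPLORE \<Longrightarrow> lwait (loc c u) = Some v \<Longrightarrow>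
    adv (card V) u (setl (recv c v u) u ((loc c u)\<lparr>lwait := None\<rparr>)) c' \<Longrightarrow>
    step V E r c c'"
| ignore: "chan c (v, u) > 0 \<Longrightarrow> lstatus (loc c u) \<noteq> INIT \<Longrightarrow>
    \<not> (lstatus (loc c u) \<in> {IDLE, DONE} \<and> lparent (loc c u) \<noteq> Some v) \<Longrightarrow>
    \<not> (lstatus (loc c u) = IDLE \<and> lparent (loc c u) = Some v) \<Longrightarrow>
    \<not> (lstatus (loc c u) = EXPLORE \<and> lwait (loc c u) = Some v) \<Longrightarrow>
    step V E r c (recv c v u)"

definition reachable :: "'v set \<Rightarrow> ('v \<times> 'v) set \<Rightarrow> 'v \<Rightarrow> 'v conf \<Rightarrow> bool" where
  "reachable V E r c \<longleftrightarrow> (step V E r)\<^sup>*\<^sup>* (init_conf E r) c"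

definition terminal :: "'v set \<Rightarrow> ('v \<times> 'v) set \<Rightarrow> 'v \<Rightarrow> 'v conf \<Rightarrow> bool" where
  "terminal V E r c \<longleftrightarrow> \<not> (\<exists>c'. step V E r c c')"

end

theory Submission
  imports Defs
begin

abbreviation st where "st c u \<equiv> lstatus (loc c u)"
abbreviation par where "par c u \<equiv> lparent (loc c u)"
abbreviation ch where "ch c u \<equiv> lchildren (loc c u)"
abbreviation cnt where "cnt c u \<equiv> lcount (loc c u)"
abbreviation todo where "todo c u \<equiv> ltodo (loc c u)"
abbreviation wt where "wt c u \<equiv> lwait (loc c u)"
abbreviation dm where "dm c u \<equiv> ldummy (loc c u)"

lemma setl_simps[simp]: "loc (setl c u s) = (loc c)(u := s)" "chan (setl c u s) = chan c" "nsent (setl c u s) = nsent c"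
  by (simp_all add: setl_def)
lemma send_simps[simp]: "loc (send c u w) = loc c" "chan (send c u w) = (chan c)((u, w) := chan c (u, w) + 1)" "nsent (send c u w) = Suc (nsent c)"
  by (simp_all add: send_def)
lemma recv_simps[simp]: "loc (recv c v u) = loc c" "chan (recv c v u) = (chan c)((v, u) := chan c (v, u) - 1)" "nsent (recv c v u) = nsent c"
  by (simp_all add: recv_def)

definition pending :: "'v conf \<Rightarrow> 'v \<Rightarrow> 'v \<Rightarrow> bool" where
  "pending c x y \<longleftrightarrow> y \<in> todo c x \<or> (wt c x = Some y \<and> 0 < chan c (x, y))"

definition sent1 :: "'v conf \<Rightarrow> 'v \<Rightarrow> 'v \<Rightarrow> bool" where
  "sent1 c w x \<longleftrightarrow> 1 \<le> cnt c w \<and> \<not> (st c w = EXPLORE \<and> \<not> dm c w \<and> cnt c w = 1 \<and> pending c w x)"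

locale bfs =
  fixes V :: "'v set" and E :: "('v \<times> 'v) set" and r :: 'v
  assumes sg: "simple_graph V E" and conn: "graph_connected V E" and rV: "r \<in> V" and n2: "2 \<le> card V"
begin

abbreviation "n \<equiv> card V"
abbreviation "N \<equiv> nbrs E"
abbreviation "d \<equiv> gdist E r"

lemma finV: "finite V" using sg by (simp add: simple_graph_def)
lemma EV: "E \<subseteq> V \<times> V" using sg by (simp add: simple_graph_def)
lemma symE: "(u, v) \<in> E \<Longrightarrow> (v, u) \<in> E" using sg by (auto simp: simple_graph_def sym_def)
lemma irrE: "(u, u) \<notin> E" using sg by (simp add: simple_graph_def)
lemma finE: "finite E" using EV finV by (meson finite_SigmaI finite_subset)
lemma N_def: "w \<in> N u \<longleftrightarrow> (u, w) \<in> E" by (simp add: nbrs_def)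
lemma NV: "N u \<subseteq> V" using EV by (auto simp: nbrs_def)
lemma finN: "finite (N u)" using NV finV finite_subset by blast
lemma E_V1: "(u, v) \<in> E \<Longrightarrow> u \<in> V" and E_V2: "(u, v) \<in> E \<Longrightarrow> v \<in> V" using EV by auto

lemma reach: "u \<in> V \<Longrightarrow> \<exists>k. (r, u) \<in> E ^^ k"
  using conn rV by (auto simp: graph_connected_def rtrancl_power)

lemma d_path: "u \<in> V \<Longrightarrow> (r, u) \<in> E ^^ d u"
  unfolding gdist_def using reach by (rule LeastI_ex)

lemma d_le: "(r, u) \<in> E ^^ k \<Longrightarrow> d u \<le> k"
  unfolding gdist_def by (rule Least_le)

lemma d_r[simp]: "d r = 0" using d_le[of r 0] by simp

lemma d_zero: "u \<in> V \<Longrightarrow> d u = 0 \<Longrightarrow> u = r"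
  using d_path[of u] by simp

lemma d_edge: "(u, v) \<in> E \<Longrightarrow> d v \<le> d u + 1"
proof -
  assume e: "(u, v) \<in> E"
  hence "(r, v) \<in> E ^^ Suc (d u)" using d_path[OF E_V1[OF e]] by auto
  thus ?thesis using d_le by fastforce
qed

lemma d_pred: "u \<in> V \<Longrightarrow> u \<noteq> r \<Longrightarrow> \<exists>p. (p, u) \<in> E \<and> d p + 1 = d u"
proof -
  assume u: "u \<in> V" "u \<noteq> r"
  then obtain j where j: "d u = Suc j" using d_zero by (cases "d u") auto
  then obtain p where p: "(r, p) \<in> E ^^ j" "(p, u) \<in> E" using d_path[OF u(1)] by (auto elim: relpow_Suc_E)
  have "d p \<le> j" using d_le p(1) by blast
  moreover have "d u \<le> d p + 1" using d_edge p(2) by blast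
  ultimately show ?thesis using p j by (intro exI[of _ p]) auto
qed

lemma depth_induct[consumes 1, case_names step]:
  assumes "u \<in> V" and "\<And>u. u \<in> V \<Longrightarrow> (\<And>v. v \<in> V \<Longrightarrow> d v < d u \<Longrightarrow> P v) \<Longrightarrow> P u"
  shows "P u"
proof -
  have "\<forall>u. u \<in> V \<longrightarrow> P u"
  proof (intro allI)
    fix u show "u \<in> V \<longrightarrow> P u"
      by (induct u rule: measure_induct_rule[where f = d]) (use assms(2) in blast)
  qed
  thus ?thesis using assms(1) by blast
qed

lemma d_all: "u \<in> V \<Longrightarrow> k \<le> d u \<Longrightarrow> \<exists>v\<in>V. d v = k"
proof (induct u arbitrary: k rule: depth_induct)
  case (step u)
  show ?case
  proof (cases "k = d u")
    case True thus ?thesis using step by blast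
  next
    case False
    hence "u \<noteq> r" using step by auto
    then obtain p where p: "(p, u) \<in> E" "d p + 1 = d u" using d_pred step by blast
    have "k \<le> d p" using p(2) step(3) False by simp
    moreover have "d p < d u" using p(2) by simp
    ultimately show ?thesis using step(2)[OF E_V1[OF p(1)]] by blast
  qed
qed

lemma d_bound: "u \<in> V \<Longrightarrow> d u \<le> n - 1"
proof -
  assume u: "u \<in> V"
  have "{0..d u} \<subseteq> d ` V" using d_all[OF u] by (auto simp: image_iff) (metis)
  hence "card {0..d u} \<le> card (d ` V)" using finV by (intro card_mono) auto
  also have "\<dots> \<le> n" using finV card_image_le by blast
  finally show ?thesis by simp
qed

lemma has_nbr: "u \<in> V \<Longrightarrow> N u \<noteq> {}"
proof -
  assume u: "u \<in> V"
  obtain v where v: "v \<in> V" "v \<noteq> u"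
  proof -
    have "\<not> V \<subseteq> {u}" using n2 finV by (metis One_nat_def card.empty card_insert_disjoint empty_iff finite.intros(1) le_antisym nat_le_linear not_less_eq_eq numeral_2_eq_2 subset_singletonD)
    thus ?thesis using that by blast
  qed
  hence "(u, v) \<in> E\<^sup>*" using conn u by (auto simp: graph_connected_def)
  then obtain w where "(u, w) \<in> E" using v(2) by (metis converse_rtranclE)
  thus ?thesis by (auto simp: nbrs_def)
qed

end


context bfs begin

definition "I_root c \<longleftrightarrow> st c r \<noteq> INIT \<and> par c r = None"
definition "I_par c \<longleftrightarrow> (\<forall>u\<in>V. (u \<noteq> r \<longrightarrow> (st c u = INIT \<longleftrightarrow> par c u = None)) \<and>
   (\<forall>p. par c u = Some p \<longrightarrow> (u, p) \<in> E \<and> d p + 1 = d u \<and> st c p \<noteq> INIT))"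
definition "ch_ok x s \<longleftrightarrow> lchildren s \<subseteq> N x - set_option (lparent s)"
definition "cnt_ok s \<longleftrightarrow> lcount s \<le> n - 1 \<and> (lstatus s = DONE \<longrightarrow> lcount s = n - 1) \<and>
   (lstatus s = IDLE \<longrightarrow> lcount s \<noteq> n - 1) \<and> (lstatus s = INIT \<longrightarrow> lcount s = 0) \<and> (lstatus s = EXPLORE \<longrightarrow> 1 \<le> lcount s)"
definition "exp_ok x s \<longleftrightarrow> (lstatus s = EXPLORE \<longrightarrow>
   ltodo s \<subseteq> (if ldummy s then lchildren s else N x - set_option (lparent s)) \<and> (ldummy s \<longrightarrow> lcount s = n - 1) \<and>
   (\<forall>w. lwait s = Some w \<longrightarrow> w \<in> N x - set_option (lparent s) \<and> w \<notin> ltodo s))"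
definition "I_ch c \<longleftrightarrow> (\<forall>u\<in>V. ch_ok u (loc c u))"
definition "I_cnt c \<longleftrightarrow> (\<forall>u\<in>V. cnt_ok (loc c u))"
definition "I_exp c \<longleftrightarrow> (\<forall>u\<in>V. exp_ok u (loc c u))"
definition "T1 c \<longleftrightarrow> (\<forall>x\<in>V. st c x = EXPLORE \<and> x \<noteq> r \<longrightarrow> (\<exists>p. par c x = Some p \<and> st c p = EXPLORE \<and> wt c p = Some x))"
definition "T2 c \<longleftrightarrow> (\<forall>x y. 0 < chan c (x, y) \<longrightarrow> chan c (x, y) = 1 \<and> x \<in> V \<and> y \<in> V \<and>
   ((st c x = EXPLORE \<and> wt c x = Some y \<and> st c y \<noteq> EXPLORE) \<or> (st c y = EXPLORE \<and> wt c y = Some x \<and> st c x \<noteq> EXPLORE)))"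
definition "T3 c \<longleftrightarrow> (\<forall>e e'. 0 < chan c e \<and> 0 < chan c e' \<longrightarrow> e = e')"
definition "T4 c \<longleftrightarrow> (\<forall>x\<in>V. \<forall>w. st c x = EXPLORE \<and> wt c x = Some w \<and> st c w = EXPLORE \<longrightarrow> par c w = Some x)"
definition "T5 a c \<longleftrightarrow> (case a of
    None \<Rightarrow> (\<forall>x\<in>V. st c x = EXPLORE \<longrightarrow> (\<exists>w. wt c x = Some w \<and> (st c w = EXPLORE \<or> 0 < chan c (x, w) \<or> 0 < chan c (w, x))))
  | Some u \<Rightarrow> u \<in> V \<and> st c u = EXPLORE \<and> wt c u = None \<and> (\<forall>e. chan c e = 0) \<and>
       (\<forall>x\<in>V. st c x = EXPLORE \<and> x \<noteq> u \<longrightarrow> (\<exists>w. wt c x = Some w \<and> st c w = EXPLORE)))"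
definition "rel_ok c x y \<longleftrightarrow>
   (st c x = IDLE \<longrightarrow> cnt c y + 1 = cnt c x) \<and> (st c x = DONE \<longrightarrow> cnt c y = n - 1) \<and>
   (st c x = EXPLORE \<and> \<not> dm c x \<longrightarrow> (if pending c x y then cnt c y + 2 = cnt c x else cnt c y + 1 = cnt c x)) \<and>
   (st c x = EXPLORE \<and> dm c x \<longrightarrow> (if pending c x y then cnt c y + 1 = n - 1 else cnt c y = n - 1))"
definition "I_rel c \<longleftrightarrow> (\<forall>y\<in>V. \<forall>x. par c y = Some x \<longrightarrow> rel_ok c x y)"
definition "G2 c \<longleftrightarrow> (\<forall>u\<in>V. st c u = INIT \<longrightarrow> cnt c r \<le> d u)"
definition "G3 c \<longleftrightarrow> ((\<exists>x\<in>V. (st c x = EXPLORE \<and> dm c x) \<or> st c x = DONE) \<longrightarrow> (\<forall>u\<in>V. st c u \<noteq> INIT))"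
definition "ID c \<longleftrightarrow> (\<forall>x\<in>V. \<forall>w\<in>N x. sent1 c x w \<longrightarrow> st c w \<noteq> INIT)"
definition "IK c \<longleftrightarrow> (\<forall>x\<in>V. st c x \<noteq> INIT \<longrightarrow>
   (\<forall>w\<in>N x - set_option (par c x). w \<in> ch c x \<longleftrightarrow> (par c w = Some x \<or> \<not> sent1 c w x)))"

definition "rho c u = (if st c u = EXPLORE then 3 * card (todo c u) + (if dm c u then 0 else 3 * card (ch c u)) + 2
   + (case wt c u of None \<Rightarrow> 0 | Some w \<Rightarrow> 2 * chan c (u, w) + chan c (w, u)) else 0)"
definition "bud c = (\<Sum>u\<in>V. (6 * card (N u) + 2) * cnt c u)"
definition "IM c \<longleftrightarrow> nsent c + (\<Sum>u\<in>V. rho c u) \<le> bud c"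

definition "Inv a c \<longleftrightarrow> I_root c \<and> I_par c \<and> I_ch c \<and> I_cnt c \<and> I_exp c \<and> T1 c \<and> T2 c \<and> T3 c \<and> T4 c \<and> T5 a c \<and>
   I_rel c \<and> G2 c \<and> G3 c \<and> ID c \<and> IK c \<and> IM c"

lemma local_frame: "(\<forall>x\<in>V. P x (loc c x)) \<Longrightarrow> (\<And>x. x \<in> V \<Longrightarrow> x \<noteq> u \<Longrightarrow> loc c' x = loc c x) \<Longrightarrow>
  (u \<in> V \<Longrightarrow> P u (loc c' u)) \<Longrightarrow> \<forall>x\<in>V. P x (loc c' x)"
  by metis

lemma rel_ok_cong: "st c' x = st c x \<Longrightarrow> dm c' x = dm c x \<Longrightarrow> cnt c' x = cnt c x \<Longrightarrow> cnt c' y = cnt c y \<Longrightarrow>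
  pending c' x y = pending c x y \<Longrightarrow> rel_ok c' x y = rel_ok c x y"
  unfolding rel_ok_def by simp

lemma relD: "Inv a c \<Longrightarrow> y \<in> V \<Longrightarrow> par c y = Some x \<Longrightarrow> rel_ok c x y"
  unfolding Inv_def I_rel_def by blast

lemma InvD: assumes "Inv a c" shows "I_root c" "I_par c" "I_ch c" "I_cnt c" "I_exp c" "T1 c" "T2 c" "T3 c" "T4 c" "T5 a c"
  "I_rel c" "G2 c" "G3 c" "ID c" "IK c" "IM c"
  using assms unfolding Inv_def by auto

lemma par_facts: "Inv a c \<Longrightarrow> u \<in> V \<Longrightarrow> par c u = Some p \<Longrightarrow> (u, p) \<in> E \<and> d p + 1 = d u \<and> st c p \<noteq> INIT \<and> p \<in> V"
  using InvD(2) unfolding I_par_def using E_V2 by blast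

lemma par_exists: "Inv a c \<Longrightarrow> u \<in> V \<Longrightarrow> u \<noteq> r \<Longrightarrow> st c u \<noteq> INIT \<Longrightarrow> \<exists>p. par c u = Some p"
  using InvD(2) unfolding I_par_def by auto

lemma root_facts: "Inv a c \<Longrightarrow> st c r \<noteq> INIT \<and> par c r = None"
  using InvD(1) unfolding I_root_def by auto

lemma T1D: "Inv a c \<Longrightarrow> x \<in> V \<Longrightarrow> st c x = EXPLORE \<Longrightarrow> x \<noteq> r \<Longrightarrow> \<exists>p. par c x = Some p \<and> st c p = EXPLORE \<and> wt c p = Some x"
  using InvD(6) unfolding T1_def by blast

lemma explore_root: assumes I: "Inv a c" shows "x \<in> V \<Longrightarrow> st c x = EXPLORE \<Longrightarrow> x \<noteq> r \<Longrightarrow>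
   \<exists>y\<in>V. st c y = EXPLORE \<and> par c y = Some r \<and> wt c r = Some y"
proof (induct x rule: depth_induct)
  case (step x)
  obtain p where p: "par c x = Some p" "st c p = EXPLORE" "wt c p = Some x" using T1D[OF I] step by blast
  have pp: "d p + 1 = d x" "p \<in> V" using par_facts[OF I step(1) p(1)] by auto
  show ?case
  proof (cases "p = r")
    case True thus ?thesis using p step by auto
  next
    case False thus ?thesis using step(2)[OF pp(2)] pp p by auto
  qed
qed

lemma explore_root_st: "Inv a c \<Longrightarrow> x \<in> V \<Longrightarrow> st c x = EXPLORE \<Longrightarrow> st c r = EXPLORE"
proof (cases "x = r")
  case False
  assume I: "Inv a c" and x: "x \<in> V" "st c x = EXPLORE"
  then obtain y where y: "y \<in> V" "st c y = EXPLORE" "par c y = Some r" using explore_root[OF I] False by blast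
  have "y \<noteq> r" using root_facts[OF I] y by auto
  then obtain p where "par c y = Some p" "st c p = EXPLORE" using T1D[OF I y(1,2)] by blast
  thus ?thesis using y by simp
qed simp

lemma explore_unique: assumes I: "Inv a c" shows "x \<in> V \<Longrightarrow> y \<in> V \<Longrightarrow> st c x = EXPLORE \<Longrightarrow> st c y = EXPLORE \<Longrightarrow> d x = d y \<Longrightarrow> x = y"
proof (induct x arbitrary: y rule: depth_induct)
  case (step x)
  show ?case
  proof (cases "x = r")
    case True hence "d y = 0" using step(6) by simp
    thus ?thesis using d_zero[OF step(3)] True by simp
  next
    case False
    have "y \<noteq> r"
    proof
      assume "y = r" hence "d x = 0" using step(6) by simp
      thus False using d_zero[OF step(1)] False by simp
    qed
    obtain p where p: "par c x = Some p" "st c p = EXPLORE" "wt c p = Some x" using T1D[OF I] step False by blast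
    obtain q where q: "par c y = Some q" "st c q = EXPLORE" "wt c q = Some y" using T1D[OF I] step \<open>y \<noteq> r\<close> by blast
    have pp: "d p + 1 = d x" "p \<in> V" using par_facts[OF I step(1) p(1)] by auto
    have qq: "d q + 1 = d y" "q \<in> V" using par_facts[OF I step(3) q(1)] by auto
    have "p = q" using step(2)[OF pp(2) _ qq(2) p(2) q(2)] pp qq step(6) by simp
    thus ?thesis using p q by simp
  qed
qed

lemma not_pending_of_explore: "Inv a c \<Longrightarrow> x \<in> V \<Longrightarrow> st c x = EXPLORE \<Longrightarrow> p \<in> V \<Longrightarrow> st c p = EXPLORE \<Longrightarrow>
   wt c p = Some x \<Longrightarrow> \<not> pending c p x"
proof -
  assume a: "Inv a c" "x \<in> V" "st c x = EXPLORE" "p \<in> V" "st c p = EXPLORE" "wt c p = Some x"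
  have "x \<notin> todo c p" using InvD(5)[OF a(1)] a unfolding I_exp_def exp_ok_def by blast
  moreover have "\<not> 0 < chan c (p, x)" using InvD(7)[OF a(1)] a(3,5) unfolding T2_def by blast
  ultimately show ?thesis by (simp add: pending_def)
qed

lemma stack_count: assumes I: "Inv a c" and nd: "\<not> (\<exists>y\<in>V. st c y = EXPLORE \<and> dm c y)"
  shows "x \<in> V \<Longrightarrow> st c x = EXPLORE \<Longrightarrow> cnt c x + d x = cnt c r"
proof (induct x rule: depth_induct)
  case (step x)
  show ?case
  proof (cases "x = r")
    case True thus ?thesis by simp
  next
    case False
    obtain p where p: "par c x = Some p" "st c p = EXPLORE" "wt c p = Some x" using T1D[OF I] step False by blast
    have pp: "d p + 1 = d x" "p \<in> V" using par_facts[OF I step(1) p(1)] by auto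
    have np: "\<not> pending c p x" using not_pending_of_explore[OF I step(1,3) pp(2) p(2,3)] .
    have "\<not> dm c p" using nd p pp by blast
    hence "cnt c x + 1 = cnt c p" using InvD(11)[OF I] step(1) p np unfolding I_rel_def rel_ok_def by auto
    moreover have "cnt c p + d p = cnt c r" using step(2)[OF pp(2) _ p(2)] pp by simp
    ultimately show ?thesis using pp by simp
  qed
qed

lemma quiescent:
  assumes I: "Inv a c" and nd: "\<forall>x\<in>V. st c x \<noteq> DONE" and ne: "\<forall>x\<in>V. st c x = EXPLORE \<longrightarrow> x = r"
    and rc: "\<forall>y\<in>V. par c y = Some r \<longrightarrow> cnt c y + 1 = cnt c r"
    and rp: "\<forall>w. st c r = EXPLORE \<longrightarrow> \<not> pending c r w"
    and u: "u \<in> V" and du: "d u \<le> cnt c r"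
  shows "st c u \<noteq> INIT"
proof -
  have formula: "st c v \<noteq> INIT \<longrightarrow> cnt c v + d v = cnt c r" if "v \<in> V" for v
    using that
  proof (induct v rule: depth_induct)
    case (step v)
    show ?case
    proof (intro impI, cases "v = r")
      case True thus "cnt c v + d v = cnt c r" by simp
    next
      case False
      assume dv: "st c v \<noteq> INIT"
      obtain p where p: "par c v = Some p" using par_exists[OF I step(1) False dv] by blast
      have pp: "(v, p) \<in> E" "d p + 1 = d v" "st c p \<noteq> INIT" "p \<in> V" using par_facts[OF I step(1) p] by auto
      show "cnt c v + d v = cnt c r"
      proof (cases "p = r")
        case True thus ?thesis using rc step(1) p pp by auto
      next
        case False
        hence "st c p = IDLE" using nd ne pp by (cases "st c p") auto
        hence "cnt c v + 1 = cnt c p" using InvD(11)[OF I] step(1) p unfolding I_rel_def rel_ok_def by auto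
        moreover have "cnt c p + d p = cnt c r" using step(2)[OF pp(4)] pp by auto
        ultimately show ?thesis using pp by simp
      qed
    qed
  qed
  have "\<forall>v\<in>V. d v = k \<longrightarrow> k \<le> cnt c r \<longrightarrow> st c v \<noteq> INIT" for k
  proof (induct k)
    case 0 thus ?case using root_facts[OF I] d_zero by blast
  next
    case (Suc k)
    show ?case
    proof (intro ballI impI)
      fix v assume v: "v \<in> V" "d v = Suc k" "Suc k \<le> cnt c r"
      hence "v \<noteq> r" by auto
      then obtain p where p: "(p, v) \<in> E" "d p + 1 = d v" using d_pred v by blast
      have pV: "p \<in> V" using E_V1 p by blast
      have pd: "st c p \<noteq> INIT" using Suc pV p v by auto
      have cp: "cnt c p + d p = cnt c r" using formula[OF pV] pd by simp
      have s: "sent1 c p v"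
      proof (cases "p = r")
        case True thus ?thesis using rp v unfolding sent1_def by auto
      next
        case False
        hence "st c p \<noteq> EXPLORE" using ne pV by blast
        thus ?thesis using cp p v unfolding sent1_def by auto
      qed
      thus "st c v \<noteq> INIT" using InvD(14)[OF I] pV p unfolding ID_def by (auto simp: N_def)
    qed
  qed
  thus ?thesis using u du by blast
qed

end


lemma sum_change1: "finite A \<Longrightarrow> v \<in> A \<Longrightarrow> (\<And>z. z \<in> A \<Longrightarrow> z \<noteq> v \<Longrightarrow> g z = f z) \<Longrightarrow> sum g A + f v = sum f A + g v"
proof -
  assume a: "finite A" "v \<in> A" "\<And>z. z \<in> A \<Longrightarrow> z \<noteq> v \<Longrightarrow> g z = f z"
  have "sum g A = g v + sum g (A - {v})" "sum f A = f v + sum f (A - {v})" using a by (simp_all add: sum.remove)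
  moreover have "sum g (A - {v}) = sum f (A - {v})" using a by (intro sum.cong) auto
  ultimately show ?thesis by (simp add: algebra_simps)
qed

context bfs begin

lemma init_inv: "Inv None (init_conf E r)"
proof -
  let ?c = "init_conf E r"
  have L: "loc ?c = (\<lambda>u. if u = r
                then \<lparr>lstatus = IDLE, lparent = None, lchildren = nbrs E r, lcount = 0,
                      ltodo = {}, lwait = None, ldummy = False\<rparr>
                else \<lparr>lstatus = INIT, lparent = None, lchildren = {}, lcount = 0,
                      ltodo = {}, lwait = None, ldummy = False\<rparr>)" "chan ?c = (\<lambda>_. 0)" "nsent ?c = 0"
    by (simp_all add: init_conf_def)
  have n1: "n - 1 \<noteq> 0" using n2 by simp
  have rho0: "rho ?c u = 0" for u by (simp add: rho_def L)
  show ?thesis unfolding Inv_def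
    by (simp add: I_root_def I_par_def I_ch_def I_cnt_def I_exp_def T1_def T2_def T3_def T4_def T5_def ch_ok_def cnt_ok_def exp_ok_def
        I_rel_def G2_def G3_def ID_def IK_def IM_def bud_def sent1_def rho0 L n1 nbrs_def irrE)
       (use n2 in linarith)
qed

lemma chan_single: "Inv None c \<Longrightarrow> 0 < chan c (v, u) \<Longrightarrow> chan c = (\<lambda>e. if e = (v, u) then 1 else 0)"
proof
  fix e assume I: "Inv None c" and m: "0 < chan c (v, u)"
  show "chan c e = (if e = (v, u) then 1 else 0)"
  proof (cases "e = (v, u)")
    case True thus ?thesis using InvD(7)[OF I] m unfolding T2_def by auto
  next
    case False
    hence "\<not> 0 < chan c e" using InvD(8)[OF I] m unfolding T3_def by metis
    thus ?thesis using False by simp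
  qed
qed

lemma msg_cases: "Inv a c \<Longrightarrow> 0 < chan c (x, y) \<Longrightarrow> x \<in> V \<and> y \<in> V \<and> (x, y) \<in> E \<and>
  ((st c x = EXPLORE \<and> wt c x = Some y \<and> st c y \<noteq> EXPLORE \<and> y \<in> N x - set_option (par c x)) \<or>
   (st c y = EXPLORE \<and> wt c y = Some x \<and> st c x \<noteq> EXPLORE \<and> x \<in> N y - set_option (par c y)))"
proof -
  assume I: "Inv a c" and m: "0 < chan c (x, y)"
  have t: "x \<in> V \<and> y \<in> V \<and> ((st c x = EXPLORE \<and> wt c x = Some y \<and> st c y \<noteq> EXPLORE) \<or> (st c y = EXPLORE \<and> wt c y = Some x \<and> st c x \<noteq> EXPLORE))"
    using InvD(7)[OF I] m unfolding T2_def by blast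
  have e: "\<forall>u\<in>V. st c u = EXPLORE \<longrightarrow> (\<forall>w. wt c u = Some w \<longrightarrow> w \<in> N u - set_option (par c u))"
    using InvD(5)[OF I] unfolding I_exp_def exp_ok_def by blast
  show ?thesis using t e by (auto simp: N_def dest: symE)
qed

end


context bfs begin

lemma bud_eq: "(\<And>u. u \<in> V \<Longrightarrow> cnt c' u = cnt c u) \<Longrightarrow> bud c' = bud c"
  unfolding bud_def by (intro sum.cong) auto

lemma step_set_parent:
  assumes I: "Inv None c" and m: "0 < chan c (v, u)" and s: "st c u = INIT"
  defines "c' \<equiv> send (setl (recv c v u) u ((loc c u)\<lparr>lstatus := IDLE, lparent := Some v,
                     lchildren := N u - {v}, lcount := 0\<rparr>)) u v"
  shows "Inv None c'"
proof -
  have mc: "u \<in> V" "v \<in> V" "(v, u) \<in> E" "st c v = EXPLORE" "wt c v = Some u" "u \<in> N v - set_option (par c v)"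
    using msg_cases[OF I m] s by auto
  have ur: "u \<noteq> r" using root_facts[OF I] s by auto
  have vu: "v \<noteq> u" using mc(3) irrE by auto
  have ch0: "chan c = (\<lambda>e. if e = (v, u) then 1 else 0)" using chan_single[OF I m] .
  have L: "loc c' = (loc c)(u := (loc c u)\<lparr>lstatus := IDLE, lparent := Some v, lchildren := N u - {v}, lcount := 0\<rparr>)"
    "chan c' = (\<lambda>e. if e = (u, v) then 1 else 0)" "nsent c' = Suc (nsent c)"
    unfolding c'_def using vu by (auto simp: ch0)
  have cu0: "cnt c u = 0" using InvD(4)[OF I] mc(1) s unfolding I_cnt_def cnt_ok_def by auto
  have pend: "pending c v u" using mc ch0 by (simp add: pending_def)
  have "\<not> sent1 c v u" using InvD(14)[OF I] mc s unfolding ID_def by auto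
  moreover have "1 \<le> cnt c v" using InvD(4)[OF I] mc unfolding I_cnt_def cnt_ok_def by auto
  ultimately have cv: "cnt c v = 1" "\<not> dm c v" using pend mc(4) unfolding sent1_def by auto
  have nodd: "\<not> (\<exists>x\<in>V. (st c x = EXPLORE \<and> dm c x) \<or> st c x = DONE)"
    using InvD(13)[OF I] mc(1) s unfolding G3_def by blast
  have "cnt c v + d v = cnt c r" using stack_count[OF I _ mc(2,4)] nodd by blast
  moreover have "cnt c r \<le> d u" using InvD(12)[OF I] mc(1) s unfolding G2_def by blast
  moreover have "d u \<le> d v + 1" using d_edge mc(3) by blast
  ultimately have du: "d v + 1 = d u" using cv by simp
  have uwt: "u \<notin> todo c v" using InvD(5)[OF I] mc unfolding I_exp_def exp_ok_def by blast
  have pend': "x \<noteq> u \<Longrightarrow> pending c' x y = (pending c x y \<and> \<not> (x = v \<and> y = u))" for x y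
    using uwt mc(5) by (auto simp: pending_def L ch0)
  have sent': "sent1 c' x y = (sent1 c x y \<or> (x = v \<and> y = u))" for x y
  proof (cases "x = u")
    case True thus ?thesis using cu0 vu by (simp add: sent1_def L)
  next
    case False
    have e: "st c' x = st c x" "cnt c' x = cnt c x" "dm c' x = dm c x" using False by (simp_all add: L)
    show ?thesis
    proof (cases "x = v")
      case True thus ?thesis using pend'[OF False] cv mc(4) e by (auto simp: sent1_def)
    next
      case False thus ?thesis using pend'[OF \<open>x \<noteq> u\<close>] e by (simp add: sent1_def)
    qed
  qed
  have n1: "n - 1 \<noteq> 0" using n2 by simp
  have "I_root c'" using InvD(1)[OF I] ur unfolding I_root_def by (simp add: L)
  moreover have "I_par c'"
  proof -
    have a: "st c' x = INIT \<longleftrightarrow> par c' x = None" if "x \<in> V" "x \<noteq> r" for x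
      using InvD(2)[OF I] that unfolding I_par_def by (auto simp: L)
    have b: "(x, p) \<in> E \<and> d p + 1 = d x \<and> st c' p \<noteq> INIT" if x: "x \<in> V" and p: "par c' x = Some p" for x p
    proof (cases "x = u")
      case True thus ?thesis using p mc du vu by (auto simp: L intro: symE)
    next
      case False
      hence "(x, p) \<in> E \<and> d p + 1 = d x \<and> st c p \<noteq> INIT" using par_facts[OF I x] p by (auto simp: L)
      thus ?thesis by (auto simp: L)
    qed
    show ?thesis unfolding I_par_def using a b by blast
  qed
  moreover have "I_ch c'" using InvD(3)[OF I] unfolding I_ch_def
    by (rule local_frame[where u = u]) (auto simp: L ch_ok_def)
  moreover have "I_cnt c'" using InvD(4)[OF I] unfolding I_cnt_def
    by (rule local_frame[where u = u]) (use n1 in \<open>auto simp: L cnt_ok_def\<close>)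
  moreover have "I_exp c'" using InvD(5)[OF I] unfolding I_exp_def
    by (rule local_frame[where u = u]) (auto simp: L exp_ok_def)
  moreover have "T1 c'" unfolding T1_def
  proof (intro ballI impI)
    fix x assume x: "x \<in> V" "st c' x = EXPLORE \<and> x \<noteq> r"
    hence xu: "x \<noteq> u" by (auto simp: L)
    then obtain p where "par c x = Some p" "st c p = EXPLORE" "wt c p = Some x" using T1D[OF I] x by (auto simp: L)
    moreover have "p \<noteq> u" using calculation s by auto
    ultimately show "\<exists>p. par c' x = Some p \<and> st c' p = EXPLORE \<and> wt c' p = Some x" using xu by (auto simp: L)
  qed
  moreover have "T2 c'" unfolding T2_def using mc vu by (auto simp: L)
  moreover have "T3 c'" unfolding T3_def by (auto simp: L split: if_splits)
  moreover have "T4 c'" using InvD(9)[OF I] unfolding T4_def by (auto simp: L)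
  moreover have "T5 None c'" unfolding T5_def
  proof (simp, intro ballI impI)
    fix x assume x: "x \<in> V" "st c' x = EXPLORE"
    hence xu: "x \<noteq> u" by (auto simp: L)
    obtain w where w: "wt c x = Some w" "st c w = EXPLORE \<or> 0 < chan c (x, w) \<or> 0 < chan c (w, x)"
      using InvD(10)[OF I] x xu unfolding T5_def by (auto simp: L)
    show "\<exists>w. wt c' x = Some w \<and> (st c' w = EXPLORE \<or> 0 < chan c' (x, w) \<or> 0 < chan c' (w, x))"
      using w xu s by (auto simp: L ch0 split: if_splits)
  qed
  moreover have "I_rel c'" unfolding I_rel_def
  proof (intro ballI allI impI)
    fix y x assume y: "y \<in> V" and p: "par c' y = Some x"
    show "rel_ok c' x y"
    proof (cases "y = u")
      case True
      hence "x = v" using p by (simp add: L)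
      thus ?thesis using True pend'[of v u] vu cv mc by (simp add: L rel_ok_def)
    next
      case False
      hence p0: "par c y = Some x" using p by (simp add: L)
      hence "x \<noteq> u" using par_facts[OF I y p0] s by auto
      hence "rel_ok c' x y = rel_ok c x y" using pend'[of x y] False by (intro rel_ok_cong) (auto simp: L)
      thus ?thesis using relD[OF I y p0] by simp
    qed
  qed
  moreover have "G2 c'" using InvD(12)[OF I] ur unfolding G2_def by (auto simp: L)
  moreover have "G3 c'" using nodd vu unfolding G3_def by (auto simp: L)
  moreover have "ID c'" using InvD(14)[OF I] unfolding ID_def by (auto simp: sent' L)
  moreover have "IK c'" unfolding IK_def
  proof (intro ballI impI)
    fix x w assume x: "x \<in> V" "st c' x \<noteq> INIT" and w: "w \<in> N x - set_option (par c' x)"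
    show "w \<in> ch c' x \<longleftrightarrow> (par c' w = Some x \<or> \<not> sent1 c' w x)"
    proof (cases "x = u")
      case True
      have "w \<noteq> v" "w \<noteq> u" using w True irrE by (auto simp: L N_def)
      moreover have "\<not> sent1 c w u"
      proof -
        have "(u, w) \<in> E" using w True by (simp add: N_def)
        hence "w \<in> V" "u \<in> N w" using E_V2 symE by (auto simp: N_def)
        thus ?thesis using InvD(14)[OF I] s unfolding ID_def by blast
      qed
      ultimately show ?thesis using True w by (simp add: sent' L)
    next
      case False
      have x0: "st c x \<noteq> INIT" using x False by (simp add: L)
      show ?thesis
      proof (cases "w = u")
        case True
        have "u \<in> ch c x" using InvD(15)[OF I] x(1) x0 w True False s cu0 unfolding IK_def by (auto simp: L sent1_def)
        thus ?thesis using True False cu0 by (auto simp: L sent1_def)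
      next
        case False
        thus ?thesis using InvD(15)[OF I] x(1) x0 w \<open>x \<noteq> u\<close> unfolding IK_def by (auto simp: L sent')
      qed
    qed
  qed
  moreover have "IM c'"
  proof -
    have r1: "rho c' z = rho c z" if "z \<in> V" "z \<noteq> v" for z
    proof (cases "z = u")
      case True thus ?thesis using s by (simp add: rho_def L)
    next
      case False thus ?thesis using that by (auto simp: rho_def L ch0 split: option.splits)
    qed
    have r2: "rho c v = rho c' v + 1" using mc vu by (simp add: rho_def L ch0)
    have "sum (rho c') V + rho c v = sum (rho c) V + rho c' v" by (rule sum_change1[OF finV mc(2)]) (rule r1)
    moreover have "bud c' = bud c" using cu0 by (intro bud_eq) (auto simp: L)
    ultimately show ?thesis using InvD(16)[OF I] r2 unfolding IM_def by (simp add: L)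
  qed
  ultimately show ?thesis unfolding Inv_def by blast
qed

end


context bfs begin

lemma rel_ok_cong2: "st c x \<noteq> EXPLORE \<Longrightarrow> st c' x = st c x \<Longrightarrow> cnt c' x = cnt c x \<Longrightarrow> cnt c' y = cnt c y \<Longrightarrow>
  rel_ok c' x y = rel_ok c x y"
  unfolding rel_ok_def by simp

lemma step_mark_sibling:
  assumes I: "Inv None c" and m: "0 < chan c (v, u)" and s: "st c u \<in> {IDLE, DONE}" and pu: "par c u \<noteq> Some v"
  defines "c' \<equiv> send (setl (recv c v u) u ((loc c u)\<lparr>lchildren := ch c u - {v}\<rparr>)) u v"
  shows "Inv None c'"
proof -
  have mc: "u \<in> V" "v \<in> V" "(v, u) \<in> E" "st c v = EXPLORE" "wt c v = Some u" "u \<in> N v - set_option (par c v)"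
    using msg_cases[OF I m] s by auto
  have vu: "v \<noteq> u" using mc(3) irrE by auto
  have ch0: "chan c = (\<lambda>e. if e = (v, u) then 1 else 0)" using chan_single[OF I m] .
  have L: "loc c' = (loc c)(u := (loc c u)\<lparr>lchildren := ch c u - {v}\<rparr>)"
    "chan c' = (\<lambda>e. if e = (u, v) then 1 else 0)" "nsent c' = Suc (nsent c)"
    unfolding c'_def using vu by (auto simp: ch0)
  have same: "st c' x = st c x" "par c' x = par c x" "cnt c' x = cnt c x" "todo c' x = todo c x" "wt c' x = wt c x"
     "dm c' x = dm c x" for x by (simp_all add: L)
  have su: "st c u \<noteq> EXPLORE" "st c u \<noteq> INIT" using s by auto
  have cv1: "1 \<le> cnt c v" using InvD(4)[OF I] mc unfolding I_cnt_def cnt_ok_def by auto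
  have uwt: "u \<notin> todo c v" using InvD(5)[OF I] mc unfolding I_exp_def exp_ok_def by blast
  have pend': "x \<noteq> u \<Longrightarrow> pending c' x y = (pending c x y \<and> \<not> (x = v \<and> y = u))" for x y
    using uwt mc(5) by (auto simp: pending_def L ch0)
  have sent': "sent1 c' x y = (sent1 c x y \<or> (x = v \<and> y = u))" for x y
  proof (cases "x = u")
    case True thus ?thesis using su vu by (simp add: sent1_def same)
  next
    case False
    show ?thesis
    proof (cases "x = v")
      case True thus ?thesis using pend'[OF False] cv1 mc(4) by (auto simp: sent1_def same)
    next
      case False thus ?thesis using pend'[OF \<open>x \<noteq> u\<close>] by (simp add: sent1_def same)
    qed
  qed
  have "I_root c'" using InvD(1)[OF I] unfolding I_root_def by (simp add: same)
  moreover have "I_par c'" using InvD(2)[OF I] unfolding I_par_def by (simp add: same)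
  moreover have "I_ch c'"
  proof -
    have "ch_ok u (loc c u)" using InvD(3)[OF I] mc(1) unfolding I_ch_def by blast
    hence new: "ch_ok u (loc c' u)" by (auto simp: L ch_ok_def)
    show ?thesis using InvD(3)[OF I] unfolding I_ch_def by (rule local_frame[where u = u]) (use new in \<open>auto simp: L\<close>)
  qed
  moreover have "I_cnt c'"
  proof -
    have "cnt_ok (loc c u)" using InvD(4)[OF I] mc(1) unfolding I_cnt_def by blast
    hence new: "cnt_ok (loc c' u)" by (simp add: L cnt_ok_def)
    show ?thesis using InvD(4)[OF I] unfolding I_cnt_def by (rule local_frame[where u = u]) (use new in \<open>auto simp: L\<close>)
  qed
  moreover have "I_exp c'" using InvD(5)[OF I] unfolding I_exp_def
    by (rule local_frame[where u = u]) (use su in \<open>auto simp: L exp_ok_def\<close>)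
  moreover have "T1 c'" using InvD(6)[OF I] unfolding T1_def by (simp add: same)
  moreover have "T2 c'" unfolding T2_def using mc vu su by (auto simp: L)
  moreover have "T3 c'" unfolding T3_def by (auto simp: L split: if_splits)
  moreover have "T4 c'" using InvD(9)[OF I] unfolding T4_def by (simp add: same)
  moreover have "T5 None c'" unfolding T5_def
  proof (simp, intro ballI impI)
    fix x assume x: "x \<in> V" "st c' x = EXPLORE"
    obtain w where w: "wt c x = Some w" "st c w = EXPLORE \<or> 0 < chan c (x, w) \<or> 0 < chan c (w, x)"
      using InvD(10)[OF I] x unfolding T5_def by (auto simp: same)
    show "\<exists>w. wt c' x = Some w \<and> (st c' w = EXPLORE \<or> 0 < chan c' (x, w) \<or> 0 < chan c' (w, x))"
    proof (cases "st c w = EXPLORE")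
      case True thus ?thesis using w(1) by (simp add: same)
    next
      case False
      hence "(x, w) = (v, u) \<or> (w, x) = (v, u)" using w(2) by (simp add: ch0 split: if_splits)
      moreover have "x \<noteq> u" using x su by (auto simp: same)
      ultimately have "x = v" "w = u" by auto
      thus ?thesis using w(1) vu by (simp add: same L)
    qed
  qed
  moreover have "I_rel c'" unfolding I_rel_def
  proof (intro ballI allI impI)
    fix y x assume y: "y \<in> V" and p: "par c' y = Some x"
    hence p0: "par c y = Some x" by (simp add: same)
    have "rel_ok c' x y = rel_ok c x y"
    proof (cases "x = u")
      case True thus ?thesis using su by (intro rel_ok_cong2) (auto simp: same)
    next
      case False
      have "y \<noteq> u \<or> x \<noteq> v" using pu p0 by auto
      thus ?thesis using pend'[OF False] by (intro rel_ok_cong) (auto simp: same)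
    qed
    thus "rel_ok c' x y" using relD[OF I y p0] by simp
  qed
  moreover have "G2 c'" using InvD(12)[OF I] unfolding G2_def by (simp add: same)
  moreover have "G3 c'" using InvD(13)[OF I] unfolding G3_def by (simp add: same)
  moreover have "ID c'" using InvD(14)[OF I] su unfolding ID_def by (auto simp: sent' same)
  moreover have "IK c'" unfolding IK_def
  proof (intro ballI impI)
    fix x w assume x: "x \<in> V" "st c' x \<noteq> INIT" and w: "w \<in> N x - set_option (par c' x)"
    have old: "w \<in> ch c x \<longleftrightarrow> (par c w = Some x \<or> \<not> sent1 c w x)"
      using InvD(15)[OF I] x w unfolding IK_def by (auto simp: same)
    show "w \<in> ch c' x \<longleftrightarrow> (par c' w = Some x \<or> \<not> sent1 c' w x)"
    proof (cases "x = u \<and> w = v")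
      case True
      have "par c v \<noteq> Some u" using mc(6) by auto
      thus ?thesis using True vu by (simp add: L sent')
    next
      case False
      hence "ch c' x = ch c x \<or> (x = u \<and> w \<noteq> v)" by (auto simp: L)
      thus ?thesis using old False by (auto simp: L sent' same)
    qed
  qed
  moreover have "IM c'"
  proof -
    have r1: "rho c' z = rho c z" if "z \<in> V" "z \<noteq> v" for z
    proof (cases "z = u")
      case True thus ?thesis using su by (simp add: rho_def same)
    next
      case False thus ?thesis using that by (auto simp: rho_def L ch0 split: option.splits)
    qed
    have r2: "rho c v = rho c' v + 1" using mc vu by (simp add: rho_def L ch0)
    have "sum (rho c') V + rho c v = sum (rho c) V + rho c' v" by (rule sum_change1[OF finV mc(2)]) (rule r1)
    moreover have "bud c' = bud c" by (intro bud_eq) (auto simp: same)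
    ultimately show ?thesis using InvD(16)[OF I] r2 unfolding IM_def by (simp add: L)
  qed
  ultimately show ?thesis unfolding Inv_def by blast
qed

end


lemma sum_change2: fixes f g :: "'a \<Rightarrow> nat" shows "finite A \<Longrightarrow> u \<in> A \<Longrightarrow> v \<in> A \<Longrightarrow> u \<noteq> v \<Longrightarrow> (\<And>z. z \<in> A \<Longrightarrow> z \<noteq> u \<Longrightarrow> z \<noteq> v \<Longrightarrow> g z = f z) \<Longrightarrow>
  sum g A + f u + f v = sum f A + g u + g v"
proof -
  assume a: "finite A" "u \<in> A" "v \<in> A" "u \<noteq> v" "\<And>z. z \<in> A \<Longrightarrow> z \<noteq> u \<Longrightarrow> z \<noteq> v \<Longrightarrow> g z = f z"
  let ?h = "\<lambda>z. if z = u then f u else g z"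
  have 1: "sum g A + f u = sum ?h A + g u" using sum_change1[OF a(1,2), of ?h g] by auto
  have 2: "sum ?h A + f v = sum f A + ?h v" using sum_change1[OF a(1,3), of f ?h] a(4,5) by auto
  have 3: "sum ?h A + f v = sum f A + g v" using 2 a(4) by simp
  show ?thesis using 1 3 by linarith
qed

context bfs begin

lemma no_explore_no_chan: "Inv a c \<Longrightarrow> st c r \<noteq> EXPLORE \<Longrightarrow> chan c e = 0"
proof (rule ccontr)
  assume I: "Inv a c" and s: "st c r \<noteq> EXPLORE" and "chan c e \<noteq> 0"
  then obtain x y where e: "e = (x, y)" "0 < chan c (x, y)" by (cases e) auto
  hence "x \<in> V" "y \<in> V" "st c x = EXPLORE \<or> st c y = EXPLORE" using msg_cases[OF I] by blast+
  thus False using explore_root_st[OF I] s by blast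
qed

lemma step_root_invoke:
  assumes I: "Inv None c" and s: "st c r = IDLE"
  defines "c' \<equiv> setl c r (begin_explore (N r) (loc c r))"
  shows "Inv (Some r) c'"
proof -
  have pr: "par c r = None" using root_facts[OF I] by simp
  have noex: "x \<in> V \<Longrightarrow> st c x \<noteq> EXPLORE" for x using explore_root_st[OF I] s by fastforce
  have ch0: "chan c = (\<lambda>e. 0)" using no_explore_no_chan[OF I] s by auto
  have L: "loc c' = (loc c)(r := (loc c r)\<lparr>lstatus := EXPLORE, lcount := cnt c r + 1,
      ltodo := N r, lwait := None, ldummy := False\<rparr>)" "chan c' = (\<lambda>e. 0)" "nsent c' = nsent c"
    unfolding c'_def begin_explore_def using pr by (auto simp: ch0)
  have same: "x \<noteq> r \<Longrightarrow> loc c' x = loc c x" for x by (simp add: L)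
  have co: "cnt_ok (loc c r)" using InvD(4)[OF I] rV unfolding I_cnt_def by blast
  hence crn: "cnt c r < n - 1" using s unfolding cnt_ok_def by auto
  have pend': "x \<noteq> r \<Longrightarrow> pending c' x y = pending c x y" for x y by (simp add: pending_def L ch0)
  have pendr: "pending c' r y = (y \<in> N r)" for y by (simp add: pending_def L)
  have sent': "y \<in> N x \<Longrightarrow> sent1 c' x y = sent1 c x y" for x y
  proof (cases "x = r")
    case True
    assume "y \<in> N x"
    thus ?thesis using True s by (auto simp: sent1_def L pending_def)
  next
    case False thus ?thesis using pend'[OF False] by (simp add: sent1_def same)
  qed
  have "I_root c'" using InvD(1)[OF I] unfolding I_root_def by (simp add: L)
  moreover have "I_par c'" using InvD(2)[OF I] unfolding I_par_def by (auto simp: L)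
  moreover have "I_ch c'" using InvD(3)[OF I] unfolding I_ch_def by (auto simp: L ch_ok_def)
  moreover have "I_cnt c'"
  proof -
    have new: "cnt_ok (loc c' r)" using crn by (simp add: L cnt_ok_def)
    show ?thesis using InvD(4)[OF I] unfolding I_cnt_def by (rule local_frame[where u = r]) (use new in \<open>auto simp: L\<close>)
  qed
  moreover have "I_exp c'"
  proof -
    have new: "exp_ok r (loc c' r)" using pr by (simp add: L exp_ok_def)
    show ?thesis using InvD(5)[OF I] unfolding I_exp_def by (rule local_frame[where u = r]) (use new in \<open>auto simp: L\<close>)
  qed
  moreover have "T1 c'" unfolding T1_def using noex by (auto simp: L)
  moreover have "T2 c'" unfolding T2_def by (simp add: L)
  moreover have "T3 c'" unfolding T3_def by (simp add: L)
  moreover have "T4 c'" unfolding T4_def using noex by (auto simp: L)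
  moreover have "T5 (Some r) c'" unfolding T5_def using noex rV by (auto simp: L)
  moreover have "I_rel c'" unfolding I_rel_def
  proof (intro ballI allI impI)
    fix y x assume y: "y \<in> V" and p: "par c' y = Some x"
    have yr: "y \<noteq> r" using p pr by (auto simp: L)
    hence p0: "par c y = Some x" using p by (simp add: L)
    have old: "rel_ok c x y" using relD[OF I y p0] .
    show "rel_ok c' x y"
    proof (cases "x = r")
      case True
      have "(y, r) \<in> E" using par_facts[OF I y p0] True by simp
      hence "y \<in> N r" using symE by (auto simp: N_def)
      thus ?thesis using old True s yr by (simp add: rel_ok_def L pending_def)
    next
      case False
      have "rel_ok c' x y = rel_ok c x y" using pend'[OF False] False yr by (intro rel_ok_cong) (simp_all add: L)
      thus ?thesis using old by simp
    qed
  qed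
  moreover have "G2 c'"
  proof (cases "\<exists>x\<in>V. st c x = DONE")
    case True
    hence "\<forall>u\<in>V. st c u \<noteq> INIT" using InvD(13)[OF I] unfolding G3_def by blast
    thus ?thesis unfolding G2_def by (auto simp: L)
  next
    case False
    have rc: "\<forall>y\<in>V. par c y = Some r \<longrightarrow> cnt c y + 1 = cnt c r" using relD[OF I] s unfolding rel_ok_def by auto
    have q: "u \<in> V \<Longrightarrow> d u \<le> cnt c r \<Longrightarrow> st c u \<noteq> INIT" for u
      by (rule quiescent[OF I]) (use False noex rc s in auto)
    show ?thesis unfolding G2_def
    proof (intro ballI impI)
      fix u assume u: "u \<in> V" "st c' u = INIT"
      hence "u \<noteq> r" "st c u = INIT" using s by (auto simp: L split: if_splits)
      thus "cnt c' r \<le> d u" using q[OF u(1)] by (fastforce simp: L)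
    qed
  qed
  moreover have "G3 c'" using InvD(13)[OF I] s unfolding G3_def by (auto simp: L split: if_splits)
  moreover have "ID c'" unfolding ID_def
  proof (intro ballI impI)
    fix x w assume x: "x \<in> V" and w: "w \<in> N x" and se: "sent1 c' x w"
    have "sent1 c x w" using se sent'[OF w] by simp
    hence "st c w \<noteq> INIT" using InvD(14)[OF I] x w unfolding ID_def by blast
    thus "st c' w \<noteq> INIT" by (simp add: L)
  qed
  moreover have "IK c'" unfolding IK_def
  proof (intro ballI impI)
    fix x w assume x: "x \<in> V" "st c' x \<noteq> INIT" and w: "w \<in> N x - set_option (par c' x)"
    have x0: "st c x \<noteq> INIT" using x s by (cases "x = r") (auto simp: L)
    have w0: "w \<in> N x - set_option (par c x)" using w by (cases "x = r") (auto simp: L)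
    have "x \<in> N w" using w symE by (auto simp: N_def)
    hence "sent1 c' w x = sent1 c w x" by (rule sent')
    moreover have "ch c' x = ch c x" "par c' w = par c w" by (simp_all add: L)
    ultimately show "w \<in> ch c' x \<longleftrightarrow> (par c' w = Some x \<or> \<not> sent1 c' w x)"
      using InvD(15)[OF I] x(1) x0 w0 unfolding IK_def by simp
  qed
  moreover have "IM c'"
  proof -
    have r1: "rho c' z = rho c z" if "z \<in> V" "z \<noteq> r" for z using that by (simp add: rho_def L ch0 split: option.splits)
    have r2: "rho c r = 0" using s by (simp add: rho_def)
    have chN: "card (ch c r) \<le> card (N r)"
      using InvD(3)[OF I] rV finN unfolding I_ch_def ch_ok_def by (meson card_mono Diff_subset subset_trans)
    have r3: "rho c' r = 3 * card (N r) + 3 * card (ch c r) + 2" by (simp add: rho_def L)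
    have "sum (rho c') V + rho c r = sum (rho c) V + rho c' r" by (rule sum_change1[OF finV rV]) (rule r1)
    moreover have "bud c' + (6 * card (N r) + 2) * cnt c r = bud c + (6 * card (N r) + 2) * cnt c' r"
      unfolding bud_def by (rule sum_change1[OF finV rV]) (simp add: L)
    ultimately show ?thesis using InvD(16)[OF I] r2 r3 chN unfolding IM_def by (simp add: L algebra_simps)
  qed
  ultimately show ?thesis unfolding Inv_def by blast
qed

end


context bfs begin

lemma no_2cycle: "Inv a c \<Longrightarrow> y \<in> V \<Longrightarrow> u \<in> V \<Longrightarrow> par c y = Some u \<Longrightarrow> par c u \<noteq> Some y"
proof
  assume I: "Inv a c" and y: "y \<in> V" and u: "u \<in> V" and p: "par c y = Some u" and q: "par c u = Some y"
  have "d u + 1 = d y" using par_facts[OF I y p] by simp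
  moreover have "d y + 1 = d u" using par_facts[OF I u q] by simp
  ultimately show False by simp
qed

lemma step_explore:
  assumes I: "Inv None c" and m: "0 < chan c (v, u)" and s: "st c u = IDLE" and pu: "par c u = Some v"
  defines "c' \<equiv> setl (recv c v u) u (begin_explore (N u) (loc c u))"
  shows "Inv (Some u) c'"
proof -
  have mc: "u \<in> V" "v \<in> V" "(v, u) \<in> E" "st c v = EXPLORE" "wt c v = Some u" "u \<in> N v - set_option (par c v)"
    using msg_cases[OF I m] s by auto
  have ur: "u \<noteq> r" using root_facts[OF I] pu by auto
  have vu: "v \<noteq> u" using mc(3) irrE by auto
  have ch0: "chan c = (\<lambda>e. if e = (v, u) then 1 else 0)" using chan_single[OF I m] .
  have L: "loc c' = (loc c)(u := (loc c u)\<lparr>lstatus := EXPLORE, lcount := cnt c u + 1,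
      ltodo := N u - {v}, lwait := None, ldummy := False\<rparr>)" "chan c' = (\<lambda>e. 0)" "nsent c' = nsent c"
    unfolding c'_def begin_explore_def using pu by (auto simp: ch0)
  have same: "x \<noteq> u \<Longrightarrow> loc c' x = loc c x" for x by (simp add: L)
  have co: "cnt_ok (loc c u)" using InvD(4)[OF I] mc(1) unfolding I_cnt_def by blast
  hence cun: "cnt c u < n - 1" using s unfolding cnt_ok_def by auto
  have uwt: "u \<notin> todo c v" using InvD(5)[OF I] mc unfolding I_exp_def exp_ok_def by blast
  have pend': "x \<noteq> u \<Longrightarrow> pending c' x y = (pending c x y \<and> \<not> (x = v \<and> y = u))" for x y
    using uwt mc(5) by (auto simp: pending_def L ch0)
  have pendu: "pending c' u y = (y \<in> N u - {v})" for y by (simp add: pending_def L)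
  have cv1: "1 \<le> cnt c v" using InvD(4)[OF I] mc unfolding I_cnt_def cnt_ok_def by auto
  have sent': "x \<noteq> u \<Longrightarrow> sent1 c' x y = (sent1 c x y \<or> (x = v \<and> y = u))" for x y
  proof -
    assume xu: "x \<noteq> u"
    show ?thesis
    proof (cases "x = v")
      case True thus ?thesis using pend'[OF xu] cv1 mc(4) xu by (auto simp: sent1_def same)
    next
      case False thus ?thesis using pend'[OF xu] xu by (simp add: sent1_def same)
    qed
  qed
  have sentu: "sent1 c' u y = (1 \<le> cnt c u \<or> y \<notin> N u - {v})" for y
    by (auto simp: sent1_def pendu) (auto simp: L)
  have sentu0: "sent1 c u y = (1 \<le> cnt c u)" for y using s by (simp add: sent1_def)
  have "I_root c'" using InvD(1)[OF I] ur unfolding I_root_def by (simp add: L)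
  moreover have "I_par c'" using InvD(2)[OF I] s unfolding I_par_def by (auto simp: L)
  moreover have "I_ch c'" using InvD(3)[OF I] unfolding I_ch_def by (auto simp: L ch_ok_def)
  moreover have "I_cnt c'"
  proof -
    have new: "cnt_ok (loc c' u)" using cun by (simp add: L cnt_ok_def)
    show ?thesis using InvD(4)[OF I] unfolding I_cnt_def by (rule local_frame[where u = u]) (use new in \<open>auto simp: L\<close>)
  qed
  moreover have "I_exp c'"
  proof -
    have new: "exp_ok u (loc c' u)" using pu by (auto simp: L exp_ok_def)
    show ?thesis using InvD(5)[OF I] unfolding I_exp_def by (rule local_frame[where u = u]) (use new in \<open>auto simp: L\<close>)
  qed
  moreover have "T1 c'" unfolding T1_def
  proof (intro ballI impI)
    fix x assume x: "x \<in> V" "st c' x = EXPLORE \<and> x \<noteq> r"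
    show "\<exists>p. par c' x = Some p \<and> st c' p = EXPLORE \<and> wt c' p = Some x"
    proof (cases "x = u")
      case True thus ?thesis using pu mc vu by (simp add: L)
    next
      case False
      then obtain p where "par c x = Some p" "st c p = EXPLORE" "wt c p = Some x" using T1D[OF I] x by (auto simp: L)
      moreover have "p \<noteq> u" using calculation s by auto
      ultimately show ?thesis using False by (auto simp: L)
    qed
  qed
  moreover have "T2 c'" unfolding T2_def by (simp add: L)
  moreover have "T3 c'" unfolding T3_def by (simp add: L)
  moreover have "T4 c'" unfolding T4_def
  proof (intro ballI allI impI)
    fix x w assume x: "x \<in> V" and h: "st c' x = EXPLORE \<and> wt c' x = Some w \<and> st c' w = EXPLORE"
    hence xu: "x \<noteq> u" by (auto simp: L)
    show "par c' w = Some x"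
    proof (cases "w = u")
      case True
      have "st c x = EXPLORE" "wt c x = Some u" using h xu True by (auto simp: L)
      then obtain w' where "wt c x = Some w'" "st c w' = EXPLORE \<or> 0 < chan c (x, w') \<or> 0 < chan c (w', x)"
        using InvD(10)[OF I] x unfolding T5_def by auto
      hence "x = v" using \<open>wt c x = Some u\<close> s xu by (auto simp: ch0 split: if_splits)
      thus ?thesis using True pu by (simp add: L)
    next
      case False
      hence "par c w = Some x" using InvD(9)[OF I] x h xu unfolding T4_def by (auto simp: L)
      thus ?thesis using False by (simp add: L)
    qed
  qed
  moreover have "T5 (Some u) c'" unfolding T5_def
  proof (simp, intro conjI ballI impI)
    show "u \<in> V" by (rule mc(1))
    show "st c' u = EXPLORE" "wt c' u = None" "\<forall>a b. chan c' (a, b) = 0" by (simp_all add: L)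
    fix x assume x: "x \<in> V" "st c' x = EXPLORE \<and> x \<noteq> u"
    hence x0: "st c x = EXPLORE" by (auto simp: L)
    obtain w where w: "wt c x = Some w" "st c w = EXPLORE \<or> 0 < chan c (x, w) \<or> 0 < chan c (w, x)"
      using InvD(10)[OF I] x(1) x0 unfolding T5_def by auto
    show "\<exists>w. wt c' x = Some w \<and> st c' w = EXPLORE"
    proof (cases "st c w = EXPLORE")
      case True
      hence "w \<noteq> u" using s by auto
      thus ?thesis using True w x by (auto simp: L)
    next
      case False
      hence "(x, w) = (v, u) \<or> (w, x) = (v, u)" using w(2) by (simp add: ch0 split: if_splits)
      hence "w = u" using x by auto
      thus ?thesis using w x by (auto simp: L)
    qed
  qed
  moreover have "I_rel c'" unfolding I_rel_def
  proof (intro ballI allI impI)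
    fix y x assume y: "y \<in> V" and p: "par c' y = Some x"
    hence p0: "par c y = Some x" by (cases "y = u") (simp_all add: L)
    have old: "rel_ok c x y" using relD[OF I y p0] .
    show "rel_ok c' x y"
    proof (cases "y = u")
      case True
      hence xv: "x = v" using p0 pu by simp
      have "pending c v u" using mc ch0 by (simp add: pending_def)
      moreover have "\<not> pending c' v u" using pend'[of v u] vu by simp
      ultimately show ?thesis using old True xv mc(4) vu unfolding rel_ok_def by (auto simp: L)
    next
      case False
      show ?thesis
      proof (cases "x = u")
        case True
        have "(y, u) \<in> E" using par_facts[OF I y p0] True by simp
        hence "y \<in> N u" using symE by (auto simp: N_def)
        moreover have "y \<noteq> v" using no_2cycle[OF I y mc(1)] p0 True pu by auto
        ultimately show ?thesis using old True s False by (simp add: rel_ok_def L pendu)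
      next
        case False
        have "rel_ok c' x y = rel_ok c x y" using pend'[OF False] False \<open>y \<noteq> u\<close>
          by (intro rel_ok_cong) (simp_all add: L)
        thus ?thesis using old by simp
      qed
    qed
  qed
  moreover have "G2 c'" using InvD(12)[OF I] ur s unfolding G2_def by (auto simp: L)
  moreover have "G3 c'" using InvD(13)[OF I] s unfolding G3_def by (auto simp: L split: if_splits)
  moreover have "ID c'" unfolding ID_def
  proof (intro ballI impI)
    fix x w assume x: "x \<in> V" and w: "w \<in> N x" and se: "sent1 c' x w"
    have "st c w \<noteq> INIT \<or> w = u"
    proof (cases "x = u")
      case True
      show ?thesis
      proof (cases "1 \<le> cnt c u")
        case True
        hence "sent1 c x w" using sentu0 \<open>x = u\<close> by simp
        thus ?thesis using InvD(14)[OF I] x w unfolding ID_def by blast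
      next
        case False
        hence "w = v" using se sentu True w by auto
        thus ?thesis using mc(4) by simp
      qed
    next
      case False
      hence "sent1 c x w \<or> w = u" using se sent' by auto
      thus ?thesis using InvD(14)[OF I] x w unfolding ID_def by blast
    qed
    thus "st c' w \<noteq> INIT" by (auto simp: L)
  qed
  moreover have "IK c'" unfolding IK_def
  proof (intro ballI impI)
    fix x w assume x: "x \<in> V" "st c' x \<noteq> INIT" and w: "w \<in> N x - set_option (par c' x)"
    have x0: "st c x \<noteq> INIT" using x s by (cases "x = u") (auto simp: L)
    have w0: "w \<in> N x - set_option (par c x)" using w by (cases "x = u") (auto simp: L)
    have old: "w \<in> ch c x \<longleftrightarrow> (par c w = Some x \<or> \<not> sent1 c w x)" using InvD(15)[OF I] x(1) x0 w0 unfolding IK_def by blast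
    have eq: "(par c w = Some x \<or> \<not> sent1 c' w x) = (par c w = Some x \<or> \<not> sent1 c w x)"
    proof (cases "w = u")
      case True
      have "x \<in> N u" using w True symE by (auto simp: N_def)
      thus ?thesis using True pu sentu sentu0 by auto
    next
      case False
      have "\<not> (w = v \<and> x = u)" using w0 pu by auto
      thus ?thesis using sent'[OF False] by auto
    qed
    have "ch c' x = ch c x" "par c' w = par c w" by (simp_all add: L)
    thus "w \<in> ch c' x \<longleftrightarrow> (par c' w = Some x \<or> \<not> sent1 c' w x)"
      using old eq by simp
  qed
  moreover have "IM c'"
  proof -
    have r1: "rho c' z = rho c z" if "z \<in> V" "z \<noteq> u" "z \<noteq> v" for z using that
      by (simp add: rho_def L ch0 split: option.splits)
    have r2: "rho c u = 0" using s by (simp add: rho_def)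
    have r4: "rho c v = rho c' v + 2" using mc vu by (simp add: rho_def L ch0)
    have chN: "card (ch c u) \<le> card (N u)"
      using InvD(3)[OF I] mc(1) finN unfolding I_ch_def ch_ok_def by (meson card_mono Diff_subset subset_trans)
    have tN: "card (N u - {v}) \<le> card (N u)" using finN by (simp add: card_mono)
    have r3: "rho c' u = 3 * card (N u - {v}) + 3 * card (ch c u) + 2" by (simp add: rho_def L)
    have "sum (rho c') V + rho c u + rho c v = sum (rho c) V + rho c' u + rho c' v"
      by (rule sum_change2[OF finV mc(1,2) vu[symmetric]]) (rule r1)
    moreover have "bud c' + (6 * card (N u) + 2) * cnt c u = bud c + (6 * card (N u) + 2) * cnt c' u"
      unfolding bud_def by (rule sum_change1[OF finV mc(1)]) (simp add: L)
    ultimately show ?thesis using InvD(16)[OF I] r2 r3 r4 chN tN unfolding IM_def by (simp add: L algebra_simps)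
  qed
  ultimately show ?thesis unfolding Inv_def by blast
qed

end


context bfs begin

lemma step_reply:
  assumes I: "Inv None c" and m: "0 < chan c (v, u)" and s: "st c u = EXPLORE" and wu: "wt c u = Some v"
  defines "c' \<equiv> setl (recv c v u) u ((loc c u)\<lparr>lwait := None\<rparr>)"
  shows "Inv (Some u) c'"
proof -
  have mc: "u \<in> V" "v \<in> V" "(v, u) \<in> E" "st c v \<noteq> EXPLORE" "v \<in> N u - set_option (par c u)"
    using msg_cases[OF I m] s by auto
  have vu: "v \<noteq> u" using mc(3) irrE by auto
  have ch0: "chan c = (\<lambda>e. if e = (v, u) then 1 else 0)" using chan_single[OF I m] .
  have L: "loc c' = (loc c)(u := (loc c u)\<lparr>lwait := None\<rparr>)" "chan c' = (\<lambda>e. 0)" "nsent c' = nsent c"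
    unfolding c'_def by (auto simp: ch0)
  have same: "st c' x = st c x" "par c' x = par c x" "cnt c' x = cnt c x" "todo c' x = todo c x"
     "dm c' x = dm c x" "ch c' x = ch c x" for x by (simp_all add: L)
  have pend: "\<And>x y. par c y = Some x \<or> st c x = EXPLORE \<Longrightarrow> pending c' x y = pending c x y"
  proof -
    fix x y assume h: "par c y = Some x \<or> st c x = EXPLORE"
    have "(x, y) \<noteq> (v, u)" using h mc(4,5) by auto
    thus "pending c' x y = pending c x y" using wu vu by (auto simp: pending_def L ch0)
  qed
  have sent': "sent1 c' x y = sent1 c x y" for x y
    using pend[of y x] unfolding sent1_def by (auto simp: same)
  have "I_root c'" using InvD(1)[OF I] unfolding I_root_def by (simp add: same)
  moreover have "I_par c'" using InvD(2)[OF I] unfolding I_par_def by (simp add: same)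
  moreover have "I_ch c'" using InvD(3)[OF I] unfolding I_ch_def by (auto simp: L ch_ok_def)
  moreover have "I_cnt c'" using InvD(4)[OF I] unfolding I_cnt_def by (auto simp: L cnt_ok_def)
  moreover have "I_exp c'"
  proof -
    have "exp_ok u (loc c u)" using InvD(5)[OF I] mc(1) unfolding I_exp_def by blast
    hence new: "exp_ok u (loc c' u)" by (simp add: L exp_ok_def split: if_splits)
    show ?thesis using InvD(5)[OF I] unfolding I_exp_def by (rule local_frame[where u = u]) (use new in \<open>auto simp: L\<close>)
  qed
  moreover have "T1 c'" unfolding T1_def
  proof (intro ballI impI)
    fix x assume x: "x \<in> V" "st c' x = EXPLORE \<and> x \<noteq> r"
    then obtain p where p: "par c x = Some p" "st c p = EXPLORE" "wt c p = Some x" using T1D[OF I] x by (auto simp: same)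
    have "p \<noteq> u" using p wu mc(4) x by (auto simp: same)
    thus "\<exists>p. par c' x = Some p \<and> st c' p = EXPLORE \<and> wt c' p = Some x" using p by (auto simp: L)
  qed
  moreover have "T2 c'" unfolding T2_def by (simp add: L)
  moreover have "T3 c'" unfolding T3_def by (simp add: L)
  moreover have "T4 c'" using InvD(9)[OF I] unfolding T4_def by (auto simp: L)
  moreover have "T5 (Some u) c'" unfolding T5_def
  proof (simp, intro conjI ballI impI)
    show "u \<in> V" by (rule mc(1))
    show "st c' u = EXPLORE" "wt c' u = None" "\<forall>a b. chan c' (a, b) = 0" using s by (simp_all add: L)
    fix x assume x: "x \<in> V" "st c' x = EXPLORE \<and> x \<noteq> u"
    hence x0: "st c x = EXPLORE" by (simp add: same)
    obtain w where w: "wt c x = Some w" "st c w = EXPLORE \<or> 0 < chan c (x, w) \<or> 0 < chan c (w, x)"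
      using InvD(10)[OF I] x(1) x0 unfolding T5_def by auto
    have "\<not> ((x, w) = (v, u) \<or> (w, x) = (v, u))" using x x0 mc(4) by auto
    hence "st c w = EXPLORE" using w(2) by (auto simp: ch0 split: if_splits)
    thus "\<exists>w. wt c' x = Some w \<and> st c' w = EXPLORE" using w x by (auto simp: L)
  qed
  moreover have "I_rel c'" unfolding I_rel_def
  proof (intro ballI allI impI)
    fix y x assume y: "y \<in> V" and p: "par c' y = Some x"
    hence p0: "par c y = Some x" by (simp add: same)
    have "rel_ok c' x y = rel_ok c x y" using pend[of y x] p0 by (intro rel_ok_cong) (simp_all add: same)
    thus "rel_ok c' x y" using relD[OF I y p0] by simp
  qed
  moreover have "G2 c'" using InvD(12)[OF I] unfolding G2_def by (simp add: same)
  moreover have "G3 c'" using InvD(13)[OF I] unfolding G3_def by (simp add: same)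
  moreover have "ID c'" using InvD(14)[OF I] unfolding ID_def by (simp add: same sent')
  moreover have "IK c'" using InvD(15)[OF I] unfolding IK_def by (simp add: same sent')
  moreover have "IM c'"
  proof -
    have r1: "rho c' z = rho c z" if "z \<in> V" "z \<noteq> u" for z
    proof (cases "z = v")
      case True thus ?thesis using mc(4) by (simp add: rho_def same)
    next
      case False thus ?thesis using that by (simp add: rho_def L ch0 split: option.splits)
    qed
    have r2: "rho c u = rho c' u + 1" using s wu vu by (simp add: rho_def L ch0)
    have "sum (rho c') V + rho c u = sum (rho c) V + rho c' u" by (rule sum_change1[OF finV mc(1)]) (rule r1)
    moreover have "bud c' = bud c" by (intro bud_eq) (simp add: same)
    ultimately show ?thesis using InvD(16)[OF I] r2 unfolding IM_def by (simp add: L)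
  qed
  ultimately show ?thesis unfolding Inv_def by blast
qed

end


context bfs begin

lemma active_facts: "Inv (Some u) c \<Longrightarrow> u \<in> V \<and> st c u = EXPLORE \<and> wt c u = None \<and> (\<forall>e. chan c e = 0) \<and>
  (\<forall>x\<in>V. st c x = EXPLORE \<and> x \<noteq> u \<longrightarrow> (\<exists>w. wt c x = Some w \<and> st c w = EXPLORE))"
proof -
  assume "Inv (Some u) c"
  hence "T5 (Some u) c" by (rule InvD(10))
  thus ?thesis unfolding T5_def by simp
qed

lemma active_exp: "Inv (Some u) c \<Longrightarrow> exp_ok u (loc c u)"
proof -
  assume I: "Inv (Some u) c"
  thus ?thesis using InvD(5)[OF I] active_facts[OF I] unfolding I_exp_def by blast
qed

lemma active_nbr_not_explore:
  assumes I: "Inv (Some u) c" and w: "w \<in> N u - set_option (par c u)"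
  shows "st c w \<noteq> EXPLORE"
proof
  assume ew: "st c w = EXPLORE"
  have A: "u \<in> V" "st c u = EXPLORE" "wt c u = None" using active_facts[OF I] by auto
  have e: "(u, w) \<in> E" using w by (simp add: N_def)
  hence wV: "w \<in> V" using E_V2 by blast
  have d1: "d w \<le> d u + 1" "d u \<le> d w + 1" using d_edge e symE by blast+
  consider "d w = d u" | "d w + 1 = d u" | "d w = d u + 1" using d1 by linarith
  thus False
  proof cases
    case 1 thus False using explore_unique[OF I wV A(1) ew A(2)] e irrE by auto
  next
    case 2
    hence ur: "u \<noteq> r" by auto
    then obtain p where p: "par c u = Some p" "st c p = EXPLORE" using T1D[OF I A(1,2)] by blast
    have "d p + 1 = d u" "p \<in> V" using par_facts[OF I A(1) p(1)] by auto
    hence "p = w" using explore_unique[OF I _ wV p(2) ew] 2 by auto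
    thus False using w p by auto
  next
    case 3
    hence wr: "w \<noteq> r" by auto
    then obtain q where q: "par c w = Some q" "st c q = EXPLORE" "wt c q = Some w" using T1D[OF I wV ew] by blast
    have "d q + 1 = d w" "q \<in> V" using par_facts[OF I wV q(1)] by auto
    hence "q = u" using explore_unique[OF I _ A(1) q(2) A(2)] 3 by auto
    thus False using q A by auto
  qed
qed

lemma adv_send_inv:
  assumes I: "Inv (Some u) c" and w: "w \<in> todo c u"
  defines "c' \<equiv> send (setl c u ((loc c u)\<lparr>ltodo := todo c u - {w}, lwait := Some w\<rparr>)) u w"
  shows "Inv None c'"
proof -
  have A: "u \<in> V" "st c u = EXPLORE" "wt c u = None" "\<And>e. chan c e = 0"
    "\<And>x. x \<in> V \<Longrightarrow> st c x = EXPLORE \<Longrightarrow> x \<noteq> u \<Longrightarrow> \<exists>w. wt c x = Some w \<and> st c w = EXPLORE"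
    using active_facts[OF I] by auto
  have ex: "exp_ok u (loc c u)" by (rule active_exp[OF I])
  have chs: "ch c u \<subseteq> N u - set_option (par c u)" using InvD(3)[OF I] A(1) unfolding I_ch_def ch_ok_def by blast
  have wN: "w \<in> N u - set_option (par c u)" using ex A(2) w chs unfolding exp_ok_def by (auto split: if_splits)
  hence wV: "w \<in> V" using NV by blast
  have wu: "w \<noteq> u" using wN irrE by (auto simp: N_def)
  have we: "st c w \<noteq> EXPLORE" by (rule active_nbr_not_explore[OF I wN])
  have ch0: "chan c = (\<lambda>e. 0)" using A(4) by auto
  have L: "loc c' = (loc c)(u := (loc c u)\<lparr>ltodo := todo c u - {w}, lwait := Some w\<rparr>)"
    "chan c' = (\<lambda>e. if e = (u, w) then 1 else 0)" "nsent c' = Suc (nsent c)"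
    unfolding c'_def by (auto simp: ch0)
  have same: "st c' x = st c x" "par c' x = par c x" "cnt c' x = cnt c x" "dm c' x = dm c x" "ch c' x = ch c x" for x
    by (simp_all add: L)
  have pend: "pending c' x y = pending c x y" for x y
    using A(3) w by (cases "x = u") (auto simp: pending_def L ch0)
  have sent': "sent1 c' x y = sent1 c x y" for x y unfolding sent1_def by (simp add: same pend)
  have "I_root c'" using InvD(1)[OF I] unfolding I_root_def by (simp add: same)
  moreover have "I_par c'" using InvD(2)[OF I] unfolding I_par_def by (simp add: same)
  moreover have "I_ch c'" using InvD(3)[OF I] unfolding I_ch_def by (auto simp: L ch_ok_def)
  moreover have "I_cnt c'" using InvD(4)[OF I] unfolding I_cnt_def by (auto simp: L cnt_ok_def)
  moreover have "I_exp c'"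
  proof -
    have new: "exp_ok u (loc c' u)" using ex wN A(2) by (auto simp: L exp_ok_def split: if_splits)
    show ?thesis using InvD(5)[OF I] unfolding I_exp_def by (rule local_frame[where u = u]) (use new in \<open>auto simp: L\<close>)
  qed
  moreover have "T1 c'" unfolding T1_def
  proof (intro ballI impI)
    fix x assume x: "x \<in> V" "st c' x = EXPLORE \<and> x \<noteq> r"
    then obtain p where p: "par c x = Some p" "st c p = EXPLORE" "wt c p = Some x" using T1D[OF I] x by (auto simp: same)
    have "p \<noteq> u" using p A(3) by auto
    thus "\<exists>p. par c' x = Some p \<and> st c' p = EXPLORE \<and> wt c' p = Some x" using p by (auto simp: L)
  qed
  moreover have "T2 c'" unfolding T2_def using A(1,2) wV we by (auto simp: L)
  moreover have "T3 c'" unfolding T3_def by (auto simp: L split: if_splits)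
  moreover have "T4 c'" unfolding T4_def
  proof (intro ballI allI impI)
    fix x w' assume x: "x \<in> V" and h: "st c' x = EXPLORE \<and> wt c' x = Some w' \<and> st c' w' = EXPLORE"
    show "par c' w' = Some x"
    proof (cases "x = u")
      case True thus ?thesis using h we by (auto simp: L)
    next
      case False thus ?thesis using InvD(9)[OF I] x h unfolding T4_def by (auto simp: L)
    qed
  qed
  moreover have "T5 None c'" unfolding T5_def
  proof (simp, intro ballI impI)
    fix x assume x: "x \<in> V" "st c' x = EXPLORE"
    show "\<exists>w'. wt c' x = Some w' \<and> (st c' w' = EXPLORE \<or> 0 < chan c' (x, w') \<or> 0 < chan c' (w', x))"
    proof (cases "x = u")
      case True thus ?thesis by (simp add: L)
    next
      case False
      then obtain w' where "wt c x = Some w'" "st c w' = EXPLORE" using A(5) x by (auto simp: same)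
      thus ?thesis using False by (auto simp: L)
    qed
  qed
  moreover have "I_rel c'" unfolding I_rel_def
  proof (intro ballI allI impI)
    fix y x assume y: "y \<in> V" and p: "par c' y = Some x"
    hence p0: "par c y = Some x" by (simp add: same)
    have "rel_ok c' x y = rel_ok c x y" by (intro rel_ok_cong) (simp_all add: same pend)
    thus "rel_ok c' x y" using relD[OF I y p0] by simp
  qed
  moreover have "G2 c'" using InvD(12)[OF I] unfolding G2_def by (simp add: same)
  moreover have "G3 c'" using InvD(13)[OF I] unfolding G3_def by (simp add: same)
  moreover have "ID c'" using InvD(14)[OF I] unfolding ID_def by (simp add: same sent')
  moreover have "IK c'" using InvD(15)[OF I] unfolding IK_def by (simp add: same sent')
  moreover have "IM c'"
  proof -
    have r1: "rho c' z = rho c z" if "z \<in> V" "z \<noteq> u" for z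
    proof (cases "z = w")
      case True thus ?thesis using we by (simp add: rho_def same)
    next
      case False thus ?thesis using that by (simp add: rho_def L ch0 split: option.splits)
    qed
    have "todo c u \<subseteq> N u" using ex A(2) chs unfolding exp_ok_def by (auto split: if_splits)
    hence ft: "finite (todo c u)" using finN finite_subset by blast
    have ct: "card (todo c u - {w}) + 1 = card (todo c u)" using ft w card_Suc_Diff1 by fastforce
    have r2: "rho c u + 2 = rho c' u + 3" using A(2,3) wu ct by (simp add: rho_def L)
    have "sum (rho c') V + rho c u = sum (rho c) V + rho c' u" by (rule sum_change1[OF finV A(1)]) (rule r1)
    moreover have "bud c' = bud c" by (intro bud_eq) (simp add: same)
    ultimately show ?thesis using InvD(16)[OF I] r2 unfolding IM_def by (simp add: L)
  qed
  ultimately show ?thesis unfolding Inv_def by blast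
qed

end


context bfs begin

lemma n1pos: "1 \<le> n - 1" using n2 by simp

lemma adv_dummy_inv:
  assumes I: "Inv (Some u) c" and t: "todo c u = {}" and nd: "\<not> dm c u" and cn: "cnt c u = n - 1"
  defines "c' \<equiv> setl c u ((loc c u)\<lparr>ltodo := ch c u, ldummy := True\<rparr>)"
  shows "Inv (Some u) c'"
proof -
  have A: "u \<in> V" "st c u = EXPLORE" "wt c u = None" "\<And>e. chan c e = 0"
    "\<And>x. x \<in> V \<Longrightarrow> st c x = EXPLORE \<Longrightarrow> x \<noteq> u \<Longrightarrow> \<exists>w. wt c x = Some w \<and> st c w = EXPLORE"
    using active_facts[OF I] by auto
  have L: "loc c' = (loc c)(u := (loc c u)\<lparr>ltodo := ch c u, ldummy := True\<rparr>)" "chan c' = chan c" "nsent c' = nsent c"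
    unfolding c'_def by auto
  have same: "st c' x = st c x" "par c' x = par c x" "cnt c' x = cnt c x" "wt c' x = wt c x" "ch c' x = ch c x" for x
    by (simp_all add: L)
  have pu: "\<not> pending c u y" for y using t A(3) by (simp add: pending_def)
  have pend: "x \<noteq> u \<Longrightarrow> pending c' x y = pending c x y" for x y by (simp add: pending_def L)
  have pendu: "pending c' u y = (y \<in> ch c u)" for y using A(3) by (simp add: pending_def L)
  have sent': "sent1 c' x y = sent1 c x y" for x y
  proof (cases "x = u")
    case True thus ?thesis using pu cn n1pos by (simp add: sent1_def L)
  next
    case False thus ?thesis using pend[OF False] by (simp add: sent1_def L)
  qed
  have allinit: "\<forall>v\<in>V. st c v \<noteq> INIT"
  proof (cases "u = r")
    case False
    obtain p where p: "par c u = Some p" "st c p = EXPLORE" "wt c p = Some u" using T1D[OF I A(1,2) False] by blast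
    have pV: "p \<in> V" using par_facts[OF I A(1) p(1)] by simp
    show ?thesis
    proof (cases "dm c p")
      case True thus ?thesis using InvD(13)[OF I] pV p(2) unfolding G3_def by blast
    next
      case False
      have np: "\<not> pending c p u" by (rule not_pending_of_explore[OF I A(1,2) pV p(2,3)])
      have "rel_ok c p u" by (rule relD[OF I A(1) p(1)])
      hence "cnt c u + 1 = cnt c p" using p(2) False np unfolding rel_ok_def by simp
      moreover have "cnt c p \<le> n - 1" using InvD(4)[OF I] pV unfolding I_cnt_def cnt_ok_def by blast
      ultimately show ?thesis using cn n1pos by simp
    qed
  next
    case True
    show ?thesis
    proof (cases "\<exists>x\<in>V. (st c x = EXPLORE \<and> dm c x) \<or> st c x = DONE")
      case True thus ?thesis using InvD(13)[OF I] unfolding G3_def by blast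
    next
      case False
      have ne: "\<forall>x\<in>V. st c x = EXPLORE \<longrightarrow> x = r"
      proof (intro ballI impI, rule ccontr)
        fix x assume "x \<in> V" "st c x = EXPLORE" "x \<noteq> r"
        then obtain y where "wt c r = Some y" using explore_root[OF I] by blast
        thus False using A(3) \<open>u = r\<close> by simp
      qed
      have rc: "\<forall>y\<in>V. par c y = Some r \<longrightarrow> cnt c y + 1 = cnt c r"
      proof (intro ballI impI)
        fix y assume "y \<in> V" "par c y = Some r"
        hence "rel_ok c r y" by (rule relD[OF I])
        thus "cnt c y + 1 = cnt c r" using A(2) nd pu[of y] \<open>u = r\<close> unfolding rel_ok_def by simp
      qed
      show ?thesis
      proof
        fix v assume v: "v \<in> V"
        show "st c v \<noteq> INIT"
          by (rule quiescent[OF I _ ne rc _ v]) (use False pu \<open>u = r\<close> cn d_bound[OF v] in auto)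
      qed
    qed
  qed
  have "I_root c'" using InvD(1)[OF I] unfolding I_root_def by (simp add: same)
  moreover have "I_par c'" using InvD(2)[OF I] unfolding I_par_def by (simp add: same)
  moreover have "I_ch c'" using InvD(3)[OF I] unfolding I_ch_def by (auto simp: L ch_ok_def)
  moreover have "I_cnt c'" using InvD(4)[OF I] unfolding I_cnt_def by (auto simp: L cnt_ok_def)
  moreover have "I_exp c'"
  proof -
    have new: "exp_ok u (loc c' u)" using A(2,3) cn by (simp add: L exp_ok_def)
    show ?thesis using InvD(5)[OF I] unfolding I_exp_def by (rule local_frame[where u = u]) (use new in \<open>auto simp: L\<close>)
  qed
  moreover have "T1 c'" using InvD(6)[OF I] unfolding T1_def by (simp add: same)
  moreover have "T2 c'" using A(4) unfolding T2_def by (simp add: L)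
  moreover have "T3 c'" using A(4) unfolding T3_def by (simp add: L)
  moreover have "T4 c'" using InvD(9)[OF I] unfolding T4_def by (simp add: same)
  moreover have "T5 (Some u) c'" using InvD(10)[OF I] unfolding T5_def by (simp only: same L(2) option.case) auto
  moreover have "I_rel c'" unfolding I_rel_def
  proof (intro ballI allI impI)
    fix y x assume y: "y \<in> V" and p: "par c' y = Some x"
    hence p0: "par c y = Some x" by (simp add: same)
    have old: "rel_ok c x y" by (rule relD[OF I y p0])
    show "rel_ok c' x y"
    proof (cases "x = u")
      case True
      have "(y, u) \<in> E" using par_facts[OF I y p0] True by simp
      hence yu: "y \<noteq> u" using irrE by auto
      have "y \<in> N u" using \<open>(y, u) \<in> E\<close> symE by (auto simp: N_def)
      moreover have "par c u \<noteq> Some y" using no_2cycle[OF I y A(1)] p0 True by simp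
      ultimately have "y \<in> ch c u" using InvD(15)[OF I] A(1,2) p0 True unfolding IK_def by auto
      thus ?thesis using old True A(2) nd pu cn yu unfolding rel_ok_def by (simp add: L pendu)
    next
      case False
      have "rel_ok c' x y = rel_ok c x y" using pend[OF False] False by (intro rel_ok_cong) (simp_all add: L)
      thus ?thesis using old by simp
    qed
  qed
  moreover have "G2 c'" using InvD(12)[OF I] unfolding G2_def by (simp add: same)
  moreover have "G3 c'" using allinit unfolding G3_def by (simp add: same)
  moreover have "ID c'" using InvD(14)[OF I] unfolding ID_def by (simp add: same sent')
  moreover have "IK c'" using InvD(15)[OF I] unfolding IK_def by (simp add: same sent')
  moreover have "IM c'"
  proof -
    have "rho c' z = rho c z" for z
      using t nd A(2,3) by (cases "z = u") (simp_all add: rho_def L split: option.splits)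
    hence "sum (rho c') V = sum (rho c) V" by simp
    moreover have "bud c' = bud c" by (intro bud_eq) (simp add: same)
    ultimately show ?thesis using InvD(16)[OF I] unfolding IM_def by (simp add: L)
  qed
  ultimately show ?thesis unfolding Inv_def by blast
qed

end


context bfs begin

definition "fin_state c u = (loc c u)\<lparr>lstatus := (if lcount (loc c u) = n - 1 then DONE else IDLE)\<rparr>"

lemma adv_fin_common:
  assumes I: "Inv (Some u) c" and t: "todo c u = {}" and fc: "dm c u \<or> cnt c u \<noteq> n - 1"
    and Lloc: "loc c' = (loc c)(u := fin_state c u)"
  shows "I_ch c'" "I_cnt c'" "I_exp c'" "G2 c'" "G3 c'" "st c' u \<noteq> EXPLORE" "st c' u \<noteq> INIT"
    "\<And>x. x \<noteq> u \<Longrightarrow> loc c' x = loc c x"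
    "\<And>y. y \<in> V \<Longrightarrow> par c y = Some u \<Longrightarrow> rel_ok c' u y"
proof -
  have A: "u \<in> V" "st c u = EXPLORE" "wt c u = None" "\<And>e. chan c e = 0"
    using active_facts[OF I] by auto
  have ex: "exp_ok u (loc c u)" by (rule active_exp[OF I])
  have pu: "\<not> pending c u y" for y using t A(3) by (simp add: pending_def)
  show sx: "x \<noteq> u \<Longrightarrow> loc c' x = loc c x" for x by (simp add: Lloc)
  have st': "st c' u = (if cnt c u = n - 1 then DONE else IDLE)" by (simp add: Lloc fin_state_def)
  have same: "par c' x = par c x" "cnt c' x = cnt c x" "ch c' x = ch c x" for x by (simp_all add: Lloc fin_state_def)
  show "st c' u \<noteq> EXPLORE" "st c' u \<noteq> INIT" using st' by auto
  show "I_ch c'" using InvD(3)[OF I] unfolding I_ch_def by (auto simp: Lloc ch_ok_def fin_state_def)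
  show "I_cnt c'"
  proof -
    have "cnt_ok (loc c u)" using InvD(4)[OF I] A(1) unfolding I_cnt_def by blast
    hence new: "cnt_ok (loc c' u)" by (auto simp: Lloc cnt_ok_def fin_state_def)
    show ?thesis using InvD(4)[OF I] unfolding I_cnt_def by (rule local_frame[where u = u]) (use new sx in auto)
  qed
  show "I_exp c'"
  proof -
    have new: "exp_ok u (loc c' u)" using st' by (auto simp: exp_ok_def)
    show ?thesis using InvD(5)[OF I] unfolding I_exp_def by (rule local_frame[where u = u]) (use new sx in auto)
  qed
  show "G2 c'"
  proof -
    have "st c' x = INIT \<longleftrightarrow> st c x = INIT" for x using st' A(2) sx by (cases "x = u") auto
    thus ?thesis using InvD(12)[OF I] unfolding G2_def by (simp add: same)
  qed
  show "G3 c'"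
  proof -
    have "\<exists>x\<in>V. (st c x = EXPLORE \<and> dm c x) \<or> st c x = DONE" if h: "\<exists>x\<in>V. (st c' x = EXPLORE \<and> dm c' x) \<or> st c' x = DONE"
    proof -
      obtain x where x: "x \<in> V" "(st c' x = EXPLORE \<and> dm c' x) \<or> st c' x = DONE" using h by blast
      show ?thesis
      proof (cases "x = u")
        case True
        hence "cnt c u = n - 1" using x st' by (auto split: if_splits)
        hence "dm c u" using fc by simp
        thus ?thesis using A(1,2) by blast
      next
        case False thus ?thesis using x sx by auto
      qed
    qed
    moreover have "st c' x \<noteq> INIT" if "st c x \<noteq> INIT" for x using that st' sx by (cases "x = u") auto
    ultimately show ?thesis using InvD(13)[OF I] unfolding G3_def by blast
  qed
  fix y assume y: "y \<in> V" and p: "par c y = Some u"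
  have old: "rel_ok c u y" by (rule relD[OF I y p])
  have yu: "y \<noteq> u" using par_facts[OF I y p] irrE by auto
  have cy: "cnt c' y = cnt c y" by (simp add: same)
  show "rel_ok c' u y"
  proof (cases "dm c u")
    case True
    hence "cnt c u = n - 1" using ex A(2) unfolding exp_ok_def by blast
    thus ?thesis using old A(2) True pu[of y] st' cy unfolding rel_ok_def by (simp add: same)
  next
    case False
    hence "cnt c u \<noteq> n - 1" using fc by simp
    thus ?thesis using old A(2) False pu[of y] st' cy unfolding rel_ok_def by (simp add: same)
  qed
qed

end


context bfs begin

lemma adv_fin_child:
  assumes I: "Inv (Some u) c" and t: "todo c u = {}" and fc: "dm c u \<or> cnt c u \<noteq> n - 1" and pu: "par c u = Some p"
  defines "c' \<equiv> send (setl c u (fin_state c u)) u p"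
  shows "Inv None c'"
proof -
  have A: "u \<in> V" "st c u = EXPLORE" "wt c u = None" "\<And>e. chan c e = 0"
    "\<And>x. x \<in> V \<Longrightarrow> st c x = EXPLORE \<Longrightarrow> x \<noteq> u \<Longrightarrow> \<exists>w. wt c x = Some w \<and> st c w = EXPLORE"
    using active_facts[OF I] by auto
  have ur: "u \<noteq> r" using root_facts[OF I] pu by auto
  obtain p' where p': "par c u = Some p'" "st c p' = EXPLORE" "wt c p' = Some u" using T1D[OF I A(1,2) ur] by blast
  have pp: "p' = p" using p' pu by simp
  have P: "st c p = EXPLORE" "wt c p = Some u" using p' pp by auto
  have pV: "p \<in> V" "(u, p) \<in> E" using par_facts[OF I A(1) pu] by auto
  have pu': "p \<noteq> u" using pV irrE by auto
  have ch0: "chan c = (\<lambda>e. 0)" using A(4) by auto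
  have L: "loc c' = (loc c)(u := fin_state c u)" "chan c' = (\<lambda>e. if e = (u, p) then 1 else 0)" "nsent c' = Suc (nsent c)"
    unfolding c'_def by (auto simp: ch0)
  note C = adv_fin_common[OF I t fc L(1)]
  have same: "par c' x = par c x" "cnt c' x = cnt c x" "ch c' x = ch c x" "wt c' x = wt c x" "dm c' x = dm c x" for x
    by (simp_all add: L fin_state_def)
  have stx: "x \<noteq> u \<Longrightarrow> st c' x = st c x" for x using C(8) by simp
  have pend: "x \<noteq> u \<Longrightarrow> pending c' x y = pending c x y" for x y by (simp add: pending_def L ch0)
  have pnd: "\<not> pending c u y" for y using t A(3) by (simp add: pending_def)
  have cu1: "1 \<le> cnt c u" using InvD(4)[OF I] A(1,2) unfolding I_cnt_def cnt_ok_def by auto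
  have sent': "sent1 c' x y = sent1 c x y" for x y
  proof (cases "x = u")
    case True thus ?thesis using C(6) pnd cu1 by (simp add: sent1_def same)
  next
    case False thus ?thesis using pend[OF False] stx[OF False] by (simp add: sent1_def same)
  qed
  have "I_root c'" using InvD(1)[OF I] ur stx unfolding I_root_def by (simp add: same)
  moreover have "I_par c'"
  proof -
    have "st c' x = INIT \<longleftrightarrow> st c x = INIT" for x using C(7) A(2) stx by (cases "x = u") auto
    thus ?thesis using InvD(2)[OF I] unfolding I_par_def by (simp add: same)
  qed
  moreover note C(1,2,3)
  moreover have "T1 c'" unfolding T1_def
  proof (intro ballI impI)
    fix x assume x: "x \<in> V" "st c' x = EXPLORE \<and> x \<noteq> r"
    hence xu: "x \<noteq> u" using C(6) by auto
    then obtain q where q: "par c x = Some q" "st c q = EXPLORE" "wt c q = Some x" using T1D[OF I] x stx by auto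
    have "q \<noteq> u" using q A(3) by auto
    thus "\<exists>q. par c' x = Some q \<and> st c' q = EXPLORE \<and> wt c' q = Some x" using q stx by (auto simp: same)
  qed
  moreover have "T2 c'" unfolding T2_def using A(1) pV P C(6) stx[OF pu'] by (auto simp: L same)
  moreover have "T3 c'" unfolding T3_def by (auto simp: L split: if_splits)
  moreover have "T4 c'" unfolding T4_def
  proof (intro ballI allI impI)
    fix x w assume x: "x \<in> V" and h: "st c' x = EXPLORE \<and> wt c' x = Some w \<and> st c' w = EXPLORE"
    have "x \<noteq> u" "w \<noteq> u" using h C(6) by auto
    thus "par c' w = Some x" using InvD(9)[OF I] x h stx unfolding T4_def by (auto simp: same)
  qed
  moreover have "T5 None c'" unfolding T5_def
  proof (simp, intro ballI impI)
    fix x assume x: "x \<in> V" "st c' x = EXPLORE"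
    hence xu: "x \<noteq> u" using C(6) by auto
    then obtain w where w: "wt c x = Some w" "st c w = EXPLORE" using A(5) x stx by auto
    show "\<exists>w. wt c' x = Some w \<and> (st c' w = EXPLORE \<or> 0 < chan c' (x, w) \<or> 0 < chan c' (w, x))"
    proof (cases "w = u")
      case True
      have "par c u = Some x" using InvD(9)[OF I] x(1) w True A(2) stx[OF xu] x(2) unfolding T4_def by auto
      hence "x = p" using pu by simp
      thus ?thesis using w True pu' by (simp add: L same)
    next
      case False thus ?thesis using w stx by (auto simp: same)
    qed
  qed
  moreover have "I_rel c'" unfolding I_rel_def
  proof (intro ballI allI impI)
    fix y x assume y: "y \<in> V" and pp: "par c' y = Some x"
    hence p0: "par c y = Some x" by (simp add: same)
    show "rel_ok c' x y"
    proof (cases "x = u")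
      case True thus ?thesis using C(9) y p0 by simp
    next
      case False
      have "rel_ok c' x y = rel_ok c x y" using pend[OF False] stx[OF False] by (intro rel_ok_cong) (simp_all add: same)
      thus ?thesis using relD[OF I y p0] by simp
    qed
  qed
  moreover note C(4,5)
  moreover have "ID c'"
  proof -
    have "st c x \<noteq> INIT \<Longrightarrow> st c' x \<noteq> INIT" for x using C(7) stx by (cases "x = u") auto
    thus ?thesis using InvD(14)[OF I] unfolding ID_def by (simp add: sent')
  qed
  moreover have "IK c'"
  proof -
    have "st c' x \<noteq> INIT \<Longrightarrow> st c x \<noteq> INIT" for x using A(2) stx by (cases "x = u") auto
    thus ?thesis using InvD(15)[OF I] unfolding IK_def by (simp add: sent' same)
  qed
  moreover have "IM c'"
  proof -
    have r1: "rho c' z = rho c z" if "z \<in> V" "z \<noteq> u" "z \<noteq> p" for z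
      using that stx[of z] by (simp add: rho_def L ch0 same split: option.splits)
    have r2: "rho c' u = 0" using C(6) by (simp add: rho_def)
    have r3: "2 \<le> rho c u" using A(2) by (simp add: rho_def)
    have r4: "rho c' p = rho c p + 1" using P stx[OF pu'] pu' by (simp add: rho_def L ch0 same)
    have "sum (rho c') V + rho c u + rho c p = sum (rho c) V + rho c' u + rho c' p"
      by (rule sum_change2[OF finV A(1) pV(1) pu'[symmetric]]) (rule r1)
    moreover have "bud c' = bud c" by (intro bud_eq) (simp add: same)
    ultimately show ?thesis using InvD(16)[OF I] r2 r3 r4 unfolding IM_def by (simp add: L)
  qed
  ultimately show ?thesis unfolding Inv_def by blast
qed

lemma adv_fin_root:
  assumes I: "Inv (Some u) c" and t: "todo c u = {}" and fc: "dm c u \<or> cnt c u \<noteq> n - 1" and pu: "par c u = None"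
  defines "c' \<equiv> setl c u (fin_state c u)"
  shows "Inv None c'"
proof -
  have A: "u \<in> V" "st c u = EXPLORE" "wt c u = None" "\<And>e. chan c e = 0"
    using active_facts[OF I] by auto
  have ur: "u = r" using InvD(2)[OF I] A(1,2) pu unfolding I_par_def by auto
  have ne: "x \<in> V \<Longrightarrow> st c x = EXPLORE \<Longrightarrow> x = u" for x
  proof (rule ccontr)
    assume "x \<in> V" "st c x = EXPLORE" "x \<noteq> u"
    then obtain y where "wt c r = Some y" using explore_root[OF I] ur by blast
    thus False using A(3) ur by simp
  qed
  have ch0: "chan c = (\<lambda>e. 0)" using A(4) by auto
  have L: "loc c' = (loc c)(u := fin_state c u)" "chan c' = (\<lambda>e. 0)" "nsent c' = nsent c"
    unfolding c'_def by (auto simp: ch0)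
  note C = adv_fin_common[OF I t fc L(1)]
  have same: "par c' x = par c x" "cnt c' x = cnt c x" "ch c' x = ch c x" "wt c' x = wt c x" "dm c' x = dm c x" for x
    by (simp_all add: L fin_state_def)
  have stx: "x \<noteq> u \<Longrightarrow> st c' x = st c x" for x using C(8) by simp
  have noex: "x \<in> V \<Longrightarrow> st c' x \<noteq> EXPLORE" for x using ne stx C(6) by (cases "x = u") auto
  have pend: "x \<noteq> u \<Longrightarrow> pending c' x y = pending c x y" for x y by (simp add: pending_def L ch0)
  have pnd: "\<not> pending c u y" for y using t A(3) by (simp add: pending_def)
  have cu1: "1 \<le> cnt c u" using InvD(4)[OF I] A(1,2) unfolding I_cnt_def cnt_ok_def by auto
  have sent': "sent1 c' x y = sent1 c x y" for x y
  proof (cases "x = u")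
    case True thus ?thesis using C(6) pnd cu1 by (simp add: sent1_def same)
  next
    case False thus ?thesis using pend[OF False] stx[OF False] by (simp add: sent1_def same)
  qed
  have "I_root c'" using InvD(1)[OF I] ur C(7) unfolding I_root_def by (simp add: same)
  moreover have "I_par c'"
  proof -
    have "st c' x = INIT \<longleftrightarrow> st c x = INIT" for x using C(7) A(2) stx by (cases "x = u") auto
    thus ?thesis using InvD(2)[OF I] unfolding I_par_def by (simp add: same)
  qed
  moreover note C(1,2,3)
  moreover have "T1 c'" unfolding T1_def using noex by blast
  moreover have "T2 c'" unfolding T2_def by (simp add: L)
  moreover have "T3 c'" unfolding T3_def by (simp add: L)
  moreover have "T4 c'" unfolding T4_def using noex by blast
  moreover have "T5 None c'" unfolding T5_def using noex by simp
  moreover have "I_rel c'" unfolding I_rel_def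
  proof (intro ballI allI impI)
    fix y x assume y: "y \<in> V" and pp: "par c' y = Some x"
    hence p0: "par c y = Some x" by (simp add: same)
    show "rel_ok c' x y"
    proof (cases "x = u")
      case True thus ?thesis using C(9) y p0 by simp
    next
      case False
      have "rel_ok c' x y = rel_ok c x y" using pend[OF False] stx[OF False] by (intro rel_ok_cong) (simp_all add: same)
      thus ?thesis using relD[OF I y p0] by simp
    qed
  qed
  moreover note C(4,5)
  moreover have "ID c'"
  proof -
    have "st c x \<noteq> INIT \<Longrightarrow> st c' x \<noteq> INIT" for x using C(7) stx by (cases "x = u") auto
    thus ?thesis using InvD(14)[OF I] unfolding ID_def by (simp add: sent')
  qed
  moreover have "IK c'"
  proof -
    have "st c' x \<noteq> INIT \<Longrightarrow> st c x \<noteq> INIT" for x using A(2) stx by (cases "x = u") auto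
    thus ?thesis using InvD(15)[OF I] unfolding IK_def by (simp add: sent' same)
  qed
  moreover have "IM c'"
  proof -
    have r1: "rho c' z = rho c z" if "z \<in> V" "z \<noteq> u" for z
      using that stx[of z] by (simp add: rho_def L ch0 same split: option.splits)
    have r2: "rho c' u = 0" using C(6) by (simp add: rho_def)
    have "sum (rho c') V + rho c u = sum (rho c) V + rho c' u" by (rule sum_change1[OF finV A(1)]) (rule r1)
    moreover have "bud c' = bud c" by (intro bud_eq) (simp add: same)
    ultimately show ?thesis using InvD(16)[OF I] r2 unfolding IM_def by (simp add: L)
  qed
  ultimately show ?thesis unfolding Inv_def by blast
qed

lemma adv_inv: "adv n u c c' \<Longrightarrow> Inv (Some u) c \<Longrightarrow> Inv None c'"
proof (induct rule: adv.induct)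
  case (adv_send w c u)
  thus ?case using adv_send_inv by blast
next
  case (adv_dummy c u c')
  thus ?case using adv_dummy_inv by blast
next
  case (adv_fin c u c')
  show ?case
  proof (cases "par c u")
    case None
    thus ?thesis using adv_fin adv_fin_root[OF adv_fin(4,1,2) None] by (simp add: fin_state_def)
  next
    case (Some p)
    thus ?thesis using adv_fin adv_fin_child[OF adv_fin(4,1,2) Some] by (simp add: fin_state_def)
  qed
qed

end


context bfs begin

lemma no_ignore:
  assumes I: "Inv None c" and m: "0 < chan c (v, u)" and s: "st c u \<noteq> INIT"
    and c1: "\<not> (st c u \<in> {IDLE, DONE} \<and> par c u \<noteq> Some v)"
    and c2: "\<not> (st c u = IDLE \<and> par c u = Some v)"
    and c3: "\<not> (st c u = EXPLORE \<and> wt c u = Some v)"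
  shows False
proof -
  have mc: "v \<in> V" "u \<in> V" "(st c v = EXPLORE \<and> wt c v = Some u \<and> st c u \<noteq> EXPLORE) \<or> (st c u = EXPLORE \<and> wt c u = Some v)"
    using msg_cases[OF I m] by auto
  hence h: "st c v = EXPLORE" "wt c v = Some u" "st c u \<noteq> EXPLORE" using c3 by auto
  have "st c u \<in> {IDLE, DONE}" using s h(3) by (cases "st c u") auto
  hence pu: "par c u = Some v" and du: "st c u = DONE" using c1 c2 by auto
  have "rel_ok c v u" by (rule relD[OF I mc(2) pu])
  moreover have "pending c v u" using h(2) m by (simp add: pending_def)
  moreover have "cnt c u = n - 1" using InvD(4)[OF I] mc(2) du unfolding I_cnt_def cnt_ok_def by auto
  moreover have "cnt c v \<le> n - 1" using InvD(4)[OF I] mc(1) unfolding I_cnt_def cnt_ok_def by auto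
  ultimately show False using h(1) unfolding rel_ok_def by (auto split: if_splits)
qed

lemma step_inv: "step V E r c c' \<Longrightarrow> Inv None c \<Longrightarrow> Inv None c'"
proof (induct rule: step.induct)
  case (root_invoke c c')
  thus ?case using step_root_invoke[OF root_invoke(3,1)] adv_inv by blast
next
  case (set_parent c v u)
  thus ?case using step_set_parent by blast
next
  case (mark_sibling c v u)
  thus ?case using step_mark_sibling by blast
next
  case (explore c v u c')
  thus ?case using step_explore[OF explore(5,1,2,3)] adv_inv by blast
next
  case (reply c v u c')
  thus ?case using step_reply[OF reply(5,1,2,3)] adv_inv by blast
next
  case (ignore c v u)
  thus ?case using no_ignore by blast
qed

lemma reach_inv: "reachable V E r c \<Longrightarrow> Inv None c"
  unfolding reachable_def
proof (induct rule: rtranclp_induct)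
  case base thus ?case by (rule init_inv)
next
  case (step y z) thus ?case using step_inv by blast
qed

end


context bfs begin

lemma sum_deg: "(\<Sum>u\<in>V. card (N u)) = card E"
proof -
  have "E = (SIGMA u:V. N u)" using EV by (auto simp: N_def)
  moreover have "card (SIGMA u:V. N u) = (\<Sum>u\<in>V. card (N u))" using finV finN by (intro card_SigmaI) auto
  ultimately show ?thesis by simp
qed

lemma cardE_m: "card E \<le> 2 * num_edges E"
proof -
  let ?S = "{{u, v} | u v. (u, v) \<in> E}"
  let ?F = "\<lambda>s. {e \<in> E. (\<lambda>(a, b). {a, b}) e = s}"
  have fS: "finite ?S"
  proof -
    have "?S = (\<lambda>(a, b). {a, b}) ` E" by auto
    thus ?thesis using finE by simp
  qed
  have "E \<subseteq> (\<Union>s\<in>?S. ?F s)" by auto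
  hence "card E \<le> card (\<Union>s\<in>?S. ?F s)" using fS finE by (intro card_mono) auto
  also have "\<dots> \<le> (\<Sum>s\<in>?S. card (?F s))" using card_UN_le[OF fS] by blast
  also have "\<dots> \<le> (\<Sum>s\<in>?S. 2)"
  proof (rule sum_mono)
    fix s assume "s \<in> ?S"
    then obtain a b where s: "s = {a, b}" by blast
    have "?F s \<subseteq> {(a, b), (b, a)}"
    proof
      fix e assume e: "e \<in> ?F s"
      obtain x y where xy: "e = (x, y)" by (cases e)
      hence "{x, y} = {a, b}" using e s by simp
      hence "(x = a \<and> y = b) \<or> (x = b \<and> y = a)" by (simp only: doubleton_eq_iff)
      thus "e \<in> {(a, b), (b, a)}" using xy by auto
    qed
    hence "card (?F s) \<le> card {(a, b), (b, a)}" by (rule card_mono[rotated]) simp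
    also have "\<dots> \<le> 2" by (cases "a = b") simp_all
    finally show "card (?F s) \<le> 2" .
  qed
  also have "\<dots> = 2 * num_edges E" by (simp add: num_edges_def)
  finally show ?thesis .
qed

lemma n_le_cardE: "n \<le> card E"
proof -
  let ?f = "\<lambda>u. (u, SOME w. (u, w) \<in> E)"
  have "\<exists>w. (u, w) \<in> E" if "u \<in> V" for u using has_nbr[OF that] by (auto simp: N_def)
  hence "?f ` V \<subseteq> E" by (auto intro: someI_ex)
  moreover have "inj_on ?f V" by (auto simp: inj_on_def)
  ultimately show ?thesis using card_inj_on_le finE by blast
qed

lemma msg_bound: "Inv a c \<Longrightarrow> nsent c \<le> 16 * n * num_edges E"
proof -
  assume I: "Inv a c"
  have "nsent c \<le> bud c" using InvD(16)[OF I] unfolding IM_def by simp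
  also have "bud c \<le> (\<Sum>u\<in>V. (6 * card (N u) + 2) * (n - 1))"
    unfolding bud_def using InvD(4)[OF I] unfolding I_cnt_def cnt_ok_def by (intro sum_mono mult_le_mono2) auto
  also have "\<dots> = (6 * card E + 2 * n) * (n - 1)"
  proof -
    have "(\<Sum>u\<in>V. (6 * card (N u) + 2) * k) = (\<Sum>u\<in>V. 6 * card (N u) + 2) * k" for k :: nat
      by (simp add: sum_distrib_right)
    moreover have "(\<Sum>u\<in>V. 6 * card (N u) + 2) = 6 * card E + 2 * n"
    proof -
      have "(\<Sum>u\<in>V. 6 * card (N u) + 2) = (\<Sum>u\<in>V. 6 * card (N u)) + (\<Sum>u\<in>V. (2::nat))"
        by (rule sum.distrib)
      also have "(\<Sum>u\<in>V. 6 * card (N u)) = 6 * (\<Sum>u\<in>V. card (N u))" by (rule sum_distrib_left[symmetric])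
      finally show ?thesis using sum_deg by simp
    qed
    ultimately show ?thesis by simp
  qed
  also have "\<dots> \<le> (8 * card E) * n" using n_le_cardE by (intro mult_le_mono) auto
  also have "\<dots> \<le> (16 * num_edges E) * n" using cardE_m by (intro mult_le_mono1) linarith
  finally show ?thesis by (simp add: algebra_simps)
qed

lemma cnt_r_bound: "Inv a c \<Longrightarrow> cnt c r \<le> n - 1"
  using InvD(4) rV unfolding I_cnt_def cnt_ok_def by blast

end


lemma adv_facts: "adv m u c c' \<Longrightarrow> (\<forall>x. x \<noteq> u \<longrightarrow> loc c' x = loc c x) \<and> cnt c' u = cnt c u \<and>
  ((nsent c' = Suc (nsent c) \<and> st c' u = st c u) \<or>
   (st c' u \<noteq> EXPLORE \<and> nsent c' = nsent c + (if par c u = None then 0 else 1)))"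
proof (induct rule: adv.induct)
  case (adv_send w c u) thus ?case by simp
next
  case (adv_dummy c u c') thus ?case by simp
next
  case (adv_fin c u c') thus ?case by (auto split: option.splits)
qed

lemma adv_ex: "\<exists>c'. adv m u c c'"
proof (cases "todo c u = {}")
  case False
  then obtain w where "w \<in> todo c u" by blast
  thus ?thesis by (blast intro: adv_send)
next
  case True
  show ?thesis
  proof (cases "dm c u \<or> cnt c u \<noteq> m - 1")
    case True
    show ?thesis by (rule exI, rule adv_fin[OF \<open>todo c u = {}\<close> True refl])
  next
    case False
    let ?c1 = "setl c u ((loc c u)\<lparr>ltodo := lchildren (loc c u), ldummy := True\<rparr>)"
    have "\<exists>c'. adv m u ?c1 c'"
    proof (cases "todo ?c1 u = {}")
      case False
      then obtain w where "w \<in> todo ?c1 u" by blast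
      thus ?thesis by (blast intro: adv_send)
    next
      case True
      show ?thesis by (rule exI, rule adv_fin[OF True _ refl]) simp
    qed
    thus ?thesis using True False by (blast intro: adv_dummy)
  qed
qed

context bfs begin

definition "mu c = 2 * (nsent c + cnt c r) + (if st c r = EXPLORE then 0 else 1)"

lemma mu_step: "step V E r c c' \<Longrightarrow> Inv None c \<Longrightarrow> mu c < mu c'"
proof (induct rule: step.induct)
  case (root_invoke c c')
  let ?c1 = "setl c r (begin_explore (N r) (loc c r))"
  have "cnt ?c1 r = cnt c r + 1" "nsent ?c1 = nsent c" by (simp_all add: begin_explore_def)
  moreover have "cnt c' r = cnt ?c1 r" "nsent c' \<ge> nsent ?c1" using adv_facts[OF root_invoke(2)] by auto
  ultimately show ?case using root_invoke(1) unfolding mu_def by simp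
next
  case (set_parent c v u)
  have "u \<noteq> r" using root_facts[OF set_parent(3)] set_parent(2) by auto
  thus ?case unfolding mu_def by simp
next
  case (mark_sibling c v u)
  thus ?case unfolding mu_def by (cases "u = r") auto
next
  case (explore c v u c')
  have ur: "u \<noteq> r" using root_facts[OF explore(5)] explore(3) by auto
  let ?c1 = "setl (recv c v u) u (begin_explore (N u) (loc c u))"
  have F: "loc c' r = loc ?c1 r" "nsent c' = Suc (nsent ?c1)"
    using adv_facts[OF explore(4)] ur explore(3) by (auto simp: begin_explore_def)
  thus ?case using ur unfolding mu_def by simp
next
  case (reply c v u c')
  let ?c1 = "setl (recv c v u) u ((loc c u)\<lparr>lwait := None\<rparr>)"
  note F = adv_facts[OF reply(4)]
  show ?case
  proof (cases "u = r")
    case False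
    have uV: "u \<in> V" using msg_cases[OF reply(5) reply(1)] by blast
    have "par c u \<noteq> None" using InvD(2)[OF reply(5)] uV False reply(2) unfolding I_par_def by auto
    hence "loc c' r = loc c r" "nsent c' = Suc (nsent c)" using F False by auto
    thus ?thesis unfolding mu_def by simp
  next
    case True
    have pr: "par c r = None" using root_facts[OF reply(5)] by simp
    show ?thesis using F True pr reply(2) unfolding mu_def by auto
  qed
next
  case (ignore c v u)
  thus ?case using no_ignore by blast
qed

lemma mu_bound: "Inv None c \<Longrightarrow> mu c \<le> 2 * (16 * n * num_edges E + (n - 1)) + 1"
  using msg_bound[of None c] cnt_r_bound[of None c] unfolding mu_def by auto

lemma bfs_termination: "\<not> (\<exists>f. f 0 = init_conf E r \<and> (\<forall>i. step V E r (f i) (f (Suc i))))"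
proof
  assume "\<exists>f. f 0 = init_conf E r \<and> (\<forall>i. step V E r (f i) (f (Suc i)))"
  then obtain f where f0: "f 0 = init_conf E r" and fs: "\<And>i. step V E r (f i) (f (Suc i))" by blast
  have R: "reachable V E r (f i)" for i
  proof (induct i)
    case 0 thus ?case using f0 by (simp add: reachable_def)
  next
    case (Suc i) thus ?case using fs[of i] unfolding reachable_def by (rule rtranclp.rtrancl_into_rtrancl)
  qed
  have M: "i \<le> mu (f i)" for i
  proof (induct i)
    case 0 thus ?case by simp
  next
    case (Suc i) thus ?case using mu_step[OF fs[of i] reach_inv[OF R[of i]]] by simp
  qed
  let ?K = "2 * (16 * n * num_edges E + (n - 1)) + 1"
  have "Suc ?K \<le> mu (f (Suc ?K))" by (rule M)
  moreover have "mu (f (Suc ?K)) \<le> ?K" by (rule mu_bound[OF reach_inv[OF R]])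
  ultimately show False by simp
qed

lemma terminal_chan: "Inv None c \<Longrightarrow> terminal V E r c \<Longrightarrow> chan c e = 0"
proof (rule ccontr)
  assume I: "Inv None c" and t: "terminal V E r c" and ne: "chan c e \<noteq> 0"
  obtain v u where e: "e = (v, u)" by (cases e)
  hence m: "0 < chan c (v, u)" using ne by simp
  have "\<exists>c'. step V E r c c'"
  proof (cases "st c u = INIT")
    case True thus ?thesis using m by (blast intro: set_parent)
  next
    case False
    show ?thesis
    proof (cases "st c u \<in> {IDLE, DONE} \<and> par c u \<noteq> Some v")
      case True thus ?thesis using m by (blast intro: mark_sibling)
    next
      case c1: False
      show ?thesis
      proof (cases "st c u = IDLE \<and> par c u = Some v")
        case True
        obtain c' where "adv (card V) u (setl (recv c v u) u (begin_explore (nbrs E u) (loc c u))) c'"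
          using adv_ex by meson
        hence "step V E r c c'" using True by (intro explore[OF m]) auto
        thus ?thesis by blast
      next
        case c2: False
        show ?thesis
        proof (cases "st c u = EXPLORE \<and> wt c u = Some v")
          case True
          obtain c' where "adv (card V) u (setl (recv c v u) u ((loc c u)\<lparr>lwait := None\<rparr>)) c'"
            using adv_ex by meson
          hence "step V E r c c'" using True by (intro reply[OF m]) auto
          thus ?thesis by blast
        next
          case c3: False
          show ?thesis using m False c1 c2 c3 by (blast intro: ignore)
        qed
      qed
    qed
  qed
  thus False using t unfolding terminal_def by blast
qed

lemma terminal_root: "Inv None c \<Longrightarrow> terminal V E r c \<Longrightarrow> st c r = DONE"
proof -
  assume I: "Inv None c" and t: "terminal V E r c"
  have ch: "\<And>e. chan c e = 0" using terminal_chan[OF I t] .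
  have "st c r \<noteq> IDLE"
  proof
    assume "st c r = IDLE"
    moreover obtain c' where "adv (card V) r (setl c r (begin_explore (nbrs E r) (loc c r))) c'"
      using adv_ex by meson
    ultimately have "step V E r c c'" by (rule root_invoke)
    hence "\<exists>c'. step V E r c c'" by blast
    thus False using t unfolding terminal_def by blast
  qed
  moreover have "st c r \<noteq> INIT" using root_facts[OF I] by simp
  moreover have "st c r \<noteq> EXPLORE"
  proof
    assume re: "st c r = EXPLORE"
    let ?X = "{x\<in>V. st c x = EXPLORE}"
    have fX: "finite ?X" using finV by simp
    have nX: "?X \<noteq> {}" using re rV by blast
    have "Max (d ` ?X) \<in> d ` ?X" using fX nX by (intro Max_in) auto
    then obtain x where x: "x \<in> V" "st c x = EXPLORE" "d x = Max (d ` ?X)" by auto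
    have mx: "d y \<le> d x" if "y \<in> V" "st c y = EXPLORE" for y
    proof -
      have "d y \<in> d ` ?X" using that by auto
      hence "d y \<le> Max (d ` ?X)" using fX by (intro Max_ge) auto
      thus ?thesis using x(3) by simp
    qed
    obtain w where w: "wt c x = Some w" "st c w = EXPLORE"
      using InvD(10)[OF I] x ch unfolding T5_def by auto
    have wV: "w \<in> V" using InvD(5)[OF I] x w NV unfolding I_exp_def exp_ok_def by blast
    have "par c w = Some x" using InvD(9)[OF I] x w unfolding T4_def by blast
    hence "d x + 1 = d w" using par_facts[OF I wV] by blast
    thus False using mx[OF wV w(2)] by simp
  qed
  ultimately show ?thesis by (cases "st c r") auto
qed

lemma terminal_props:
  assumes I: "Inv None c" and t: "terminal V E r c"
  shows "(\<forall>e. chan c e = 0) \<and> lstatus (loc c r) = DONE \<and>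
          (\<forall>u\<in>V - {r}. \<exists>p. lparent (loc c u) = Some p \<and> (u, p) \<in> E \<and> gdist E r p + 1 = gdist E r u) \<and>
          (\<forall>u\<in>V. lchildren (loc c u) = {v\<in>V. lparent (loc c v) = Some u})"
proof -
  have ch: "\<forall>e. chan c e = 0" using terminal_chan[OF I t] by blast
  have rd: "st c r = DONE" by (rule terminal_root[OF I t])
  have alld: "\<forall>u\<in>V. st c u \<noteq> INIT" using InvD(13)[OF I] rd rV unfolding G3_def by blast
  have noex: "u \<in> V \<Longrightarrow> st c u \<noteq> EXPLORE" for u using explore_root_st[OF I] rd by fastforce
  have alldone: "u \<in> V \<Longrightarrow> st c u = DONE" for u
  proof (induct u rule: depth_induct)
    case (step u)
    show ?case
    proof (cases "u = r")
      case True thus ?thesis using rd by simp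
    next
      case False
      obtain p where p: "par c u = Some p" using par_exists[OF I step(1) False] alld step(1) by blast
      have pp: "d p + 1 = d u" "p \<in> V" using par_facts[OF I step(1) p] by auto
      have "st c p = DONE" using step(2)[OF pp(2)] pp by simp
      hence "cnt c u = n - 1" using relD[OF I step(1) p] unfolding rel_ok_def by simp
      moreover have "cnt_ok (loc c u)" using InvD(4)[OF I] step(1) unfolding I_cnt_def by blast
      ultimately show ?thesis using noex[OF step(1)] alld step(1) unfolding cnt_ok_def by (cases "st c u") auto
    qed
  qed
  have bfs: "\<forall>u\<in>V - {r}. \<exists>p. par c u = Some p \<and> (u, p) \<in> E \<and> d p + 1 = d u"
  proof
    fix u assume u: "u \<in> V - {r}"
    then obtain p where p: "par c u = Some p" using par_exists[OF I] alld by blast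
    thus "\<exists>p. par c u = Some p \<and> (u, p) \<in> E \<and> d p + 1 = d u" using par_facts[OF I _ p] u by blast
  qed
  have kids: "\<forall>u\<in>V. ch c u = {v\<in>V. par c v = Some u}"
  proof
    fix u assume u: "u \<in> V"
    have sent: "sent1 c w u" if "w \<in> V" for w
      using alldone[OF that] n1pos InvD(4)[OF I] that unfolding sent1_def I_cnt_def cnt_ok_def by auto
    have chs: "ch c u \<subseteq> N u - set_option (par c u)" using InvD(3)[OF I] u unfolding I_ch_def ch_ok_def by blast
    have K: "w \<in> N u - set_option (par c u) \<Longrightarrow> w \<in> ch c u \<longleftrightarrow> (par c w = Some u \<or> \<not> sent1 c w u)" for w
      using InvD(15)[OF I] u alld unfolding IK_def by blast
    show "ch c u = {v\<in>V. par c v = Some u}"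
    proof
      show "ch c u \<subseteq> {v\<in>V. par c v = Some u}"
      proof
        fix w assume w: "w \<in> ch c u"
        hence wN: "w \<in> N u - set_option (par c u)" using chs by blast
        hence wV: "w \<in> V" using NV by blast
        thus "w \<in> {v\<in>V. par c v = Some u}" using K[OF wN] w sent[OF wV] by blast
      qed
    next
      show "{v\<in>V. par c v = Some u} \<subseteq> ch c u"
      proof
        fix w assume w: "w \<in> {v\<in>V. par c v = Some u}"
        hence wV: "w \<in> V" and pw: "par c w = Some u" by auto
        have "(w, u) \<in> E" using par_facts[OF I wV pw] by blast
        hence "w \<in> N u" using symE by (auto simp: N_def)
        moreover have "par c u \<noteq> Some w" using no_2cycle[OF I wV u pw] .
        ultimately have wN: "w \<in> N u - set_option (par c u)" by auto
        thus "w \<in> ch c u" using K[OF wN] pw by blast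
      qed
    qed
  qed
  show ?thesis using ch rd bfs kids by simp
qed

end


theorem mainTheorem4:
  "\<exists>C::nat. \<forall>(V :: 'v set) E r.
     simple_graph V E \<and> graph_connected V E \<and> r \<in> V \<and> card V \<ge> 2 \<longrightarrow>
       \<comment> \<open>termination: no infinite execution\<close>
       \<not> (\<exists>f. f 0 = init_conf E r \<and> (\<forall>i. step V E r (f i) (f (Suc i))))
     \<and> \<comment> \<open>at termination: no message in transit, root DONE, BFS tree, children sets\<close>
       (\<forall>c. reachable V E r c \<and> terminal V E r c \<longrightarrow>
          (\<forall>e. chan c e = 0) \<and>
          lstatus (loc c r) = DONE \<and>
          (\<forall>u\<in>V - {r}. \<exists>p. lparent (loc c u) = Some p \<and> (u, p) \<in> E \<and>
                            gdist E r p + 1 = gdist E r u) \<and>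
          (\<forall>u\<in>V. lchildren (loc c u) = {v\<in>V. lparent (loc c v) = Some u}))
     \<and> \<comment> \<open>message complexity O(nm)\<close>
       (\<forall>c. reachable V E r c \<longrightarrow> nsent c \<le> C * card V * num_edges E)"
proof (intro exI[of _ 16] allI impI)
  fix V :: "'v set" and E r
  assume a: "simple_graph V E \<and> graph_connected V E \<and> r \<in> V \<and> card V \<ge> 2"
  interpret bfs V E r using a by unfold_locales auto
  show "\<not> (\<exists>f. f 0 = init_conf E r \<and> (\<forall>i. step V E r (f i) (f (Suc i))))
     \<and> (\<forall>c. reachable V E r c \<and> terminal V E r c \<longrightarrow>
          (\<forall>e. chan c e = 0) \<and>
          lstatus (loc c r) = DONE \<and>
          (\<forall>u\<in>V - {r}. \<exists>p. lparent (loc c u) = Some p \<and> (u, p) \<in> E \<and>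
                            gdist E r p + 1 = gdist E r u) \<and>
          (\<forall>u\<in>V. lchildren (loc c u) = {v\<in>V. lparent (loc c v) = Some u}))
     \<and> (\<forall>c. reachable V E r c \<longrightarrow> nsent c \<le> 16 * card V * num_edges E)"
    using bfs_termination terminal_props reach_inv msg_bound by blast
qed

end
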